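(* Let $\omega$ be an infinite (one-sided or bi-sided) word over a finite alphabet $\mathcal A$ such that the subshift $(\Sigma_\omega,S)$ is uniquely ergodic. Assume that the complexity function $p$ of its language is unbounded and satisfies $\lim_n\frac{p(n+1)}{p(n)}=1$. Then the Benjamini–Schramm limit of the labelled Rauzy digraphs $\vec R(n)$ exists, is supported on arc-labellings of $\vec{\mathbf Z}$, and, under the identification of such labellings with $\mathcal A^{\mathbf Z}$, equals the unique $S$-invariant probability measure on the natural extension $(\tilde\Sigma_\omega,S)$.
   Context: $\Sigma_\omega$ is the closure of the shift-orbit of $\omega$ (in $\mathcal A^{\mathbf N}$ or $\mathcal A^{\mathbf Z}$). Its language $\mathcal L$ is the set of finite subwords of $\omega$, $p(n)=|\mathcal L\cap\mathcal A^n|$. The natural extension $\tilde\Sigma_\omega$ is the bi-sided subshift of all $\tau\in\mathcal A^{\mathbf Z}$ all of whose finite subwords lie in $\mathcal L$. For $n\ge1$, the labelled Rauzy digraph $\vec R(n)$ has vertex set $\mathcal L\cap\mathcal A^n$ and, for each word $aub\in\mathcal L\cap\mathcal A^{n+1}$ ($a,b\in\mathcal A$), one arc from $au$ to $ub$ carrying label $b$. Benjamini–Schramm limit: for a finite labelled digraph $G$, let $\nu_G$ be the law of the isomorphism class (preserving orientation and labels) of the rooted connected component of a uniformly random vertex, in the compact space of rooted connected labelled digraphs of bounded degree with the local topology; the limit of $(G_n)$ is the weak limit of $\nu_{G_n}$. A rooted arc-labelling of the directed line $\vec{\mathbf Z}$ (vertices $\mathbf Z$, arcs $i\to i+1$,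 root $0$) is identified with $x\in\mathcal A^{\mathbf Z}$, $x_i$ being the label of the arc $i\to i+1$. *)

theory Defs
  imports "HOL-Probability.Probability"
begin

definition lang_N :: "(nat \<Rightarrow> 'a) \<Rightarrow> 'a list set" where
  "lang_N \<omega> = {map (\<lambda>i. \<omega> (j + i)) [0..<k] | j k. True}"

definition lang_Z :: "(int \<Rightarrow> 'a) \<Rightarrow> 'a list set" where
  "lang_Z \<omega> = {map (\<lambda>i. \<omega> (j + int i)) [0..<k] | j k. True}"

definition complexity :: "'a list set \<Rightarrow> nat \<Rightarrow> nat" where
  "complexity L n = card {w \<in> L. length w = n}"

definition shiftN :: "(nat \<Rightarrow> 'a) \<Rightarrow> nat \<Rightarrow> 'a" where
  "shiftN x = (\<lambda>i. x (Suc i))"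

definition shiftZ :: "(int \<Rightarrow> 'a) \<Rightarrow> int \<Rightarrow> 'a" where
  "shiftZ x = (\<lambda>i. x (i + 1))"

definition seq_top :: "('i \<Rightarrow> 'a) topology" where
  "seq_top = product_topology (\<lambda>_. discrete_topology UNIV) UNIV"

definition SigmaN :: "(nat \<Rightarrow> 'a) \<Rightarrow> (nat \<Rightarrow> 'a) set" where
  "SigmaN \<omega> = seq_top closure_of range (\<lambda>k. (shiftN ^^ k) \<omega>)"

definition SigmaZ :: "(int \<Rightarrow> 'a) \<Rightarrow> (int \<Rightarrow> 'a) set" where
  "SigmaZ \<omega> = seq_top closure_of {(\<lambda>i. \<omega> (i + k)) | k :: int. True}"

text \<open>Natural extension: bi-sided sequences all of whose finite subwords lie in L.\<close>
definition natext :: "'a list set \<Rightarrow> (int \<Rightarrow> 'a) set" where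
  "natext L = {\<tau>. \<forall>j k. map (\<lambda>i. \<tau> (j + int i)) [0..<k] \<in> L}"

definition seq_space :: "('i \<Rightarrow> 'a) measure" where
  "seq_space = PiM UNIV (\<lambda>_. count_space UNIV)"

text \<open>T-invariant Borel probability measures on X (viewed as measures on A^I of full mass on X).\<close>
definition inv_probs :: "(('i \<Rightarrow> 'a) \<Rightarrow> ('i \<Rightarrow> 'a)) \<Rightarrow> ('i \<Rightarrow> 'a) set \<Rightarrow> ('i \<Rightarrow> 'a) measure set" where
  "inv_probs T X = {M. sets M = sets seq_space \<and> prob_space M \<and> emeasure M X = 1
                        \<and> distr M seq_space T = M}"

definition uniquely_ergodic :: "(('i \<Rightarrow> 'a) \<Rightarrow> ('i \<Rightarrow> 'a)) \<Rightarrow> ('i \<Rightarrow> 'a) set \<Rightarrow> bool" where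
  "uniquely_ergodic T X \<longleftrightarrow> (\<exists>!M. M \<in> inv_probs T X)"

text \<open>A labelled digraph is a pair (vertex set, set of arcs (source, label, target)).\<close>
type_synonym ('v, 'a) ldigraph = "'v set \<times> ('v \<times> 'a \<times> 'v) set"
type_synonym ('v, 'a) rooted_ldigraph = "'v set \<times> ('v \<times> 'a \<times> 'v) set \<times> 'v"

definition rauzy :: "'a list set \<Rightarrow> nat \<Rightarrow> ('a list, 'a) ldigraph" where
  "rauzy L n = ({w \<in> L. length w = n},
                {(a # u, b, u @ [b]) | a u b. a # u @ [b] \<in> L \<and> length u + 1 = n})"

definition adj_rel :: "('v \<times> 'a \<times> 'v) set \<Rightarrow> ('v \<times> 'v) set" where
  "adj_rel E = {(u, w). \<exists>a. (u, a, w) \<in> E \<or> (w, a, u) \<in> E}"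

definition ball :: "('v, 'a) ldigraph \<Rightarrow> 'v \<Rightarrow> nat \<Rightarrow> ('v, 'a) rooted_ldigraph" where
  "ball G v r =
     (let B = {w \<in> fst G. \<exists>k\<le>r. (v, w) \<in> (adj_rel (snd G)) ^^ k}
      in (B, {(u, a, w) \<in> snd G. u \<in> B \<and> w \<in> B}, v))"

definition rooted_iso :: "('v, 'a) rooted_ldigraph \<Rightarrow> ('w, 'a) rooted_ldigraph \<Rightarrow> bool" where
  "rooted_iso G H \<longleftrightarrow>
     (case G of (V1, E1, o1) \<Rightarrow> case H of (V2, E2, o2) \<Rightarrow>
       \<exists>f. bij_betw f V1 V2 \<and> f o1 = o2 \<and>
           (\<forall>u\<in>V1. \<forall>w\<in>V1. \<forall>a. (u, a, w) \<in> E1 \<longleftrightarrow> (f u, a, f w) \<in> E2))"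

definition finite_rooted_ldigraph :: "('v, 'a) rooted_ldigraph \<Rightarrow> bool" where
  "finite_rooted_ldigraph H \<longleftrightarrow>
     (case H of (V, E, rt) \<Rightarrow> finite V \<and> rt \<in> V \<and> E \<subseteq> V \<times> UNIV \<times> V)"

text \<open>Frequency, among the vertices of G, of roots whose r-ball is isomorphic to H
  (= \<nu>_G of the cylinder event "r-ball \<cong> H").\<close>
definition bs_freq :: "('v, 'a) ldigraph \<Rightarrow> nat \<Rightarrow> ('w, 'a) rooted_ldigraph \<Rightarrow> real" where
  "bs_freq G r H = real (card {v \<in> fst G. rooted_iso (ball G v r) H}) / real (card (fst G))"

definition line_graph :: "(int \<Rightarrow> 'a) \<Rightarrow> (int, 'a) ldigraph" where
  "line_graph x = (UNIV, {(i, x i, i + 1) | i. True})"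

text \<open>Local (Benjamini--Schramm) convergence
  of bounded-degree labelled graphs is convergence of the frequencies of all rooted r-balls.\<close>
definition BS_limit_line :: "(nat \<Rightarrow> ('v, 'a) ldigraph) \<Rightarrow> (int \<Rightarrow> 'a) measure \<Rightarrow> bool" where
  "BS_limit_line G \<mu> \<longleftrightarrow>
     (\<forall>r (H :: (nat, 'a) rooted_ldigraph). finite_rooted_ldigraph H \<longrightarrow>
        (\<lambda>n. bs_freq (G n) r H) \<longlonglongrightarrow>
          measure \<mu> {x \<in> space \<mu>. rooted_iso (ball (line_graph x) 0 r) H})"

end

theory Submission
  imports Defs "HOL-Library.Diagonal_Subsequence"
begin

locale lang =
  fixes L :: "'a::finite list set"
  assumes pre: "u @ v \<in> L \<Longrightarrow> u \<in> L"
    and suf: "u @ v \<in> L \<Longrightarrow> v \<in> L"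
    and rext: "w \<in> L \<Longrightarrow> \<exists>b. w @ [b] \<in> L"
    and lext: "card {w \<in> L. length w = n \<and> (\<forall>a. a # w \<notin> L)} \<le> 1"
    and nil: "[] \<in> L"
begin

definition Ln :: "nat \<Rightarrow> 'a list set" where "Ln n = {w \<in> L. length w = n}"
definition nx :: "'a list \<Rightarrow> 'a" where "nx w = (SOME b. w @ [b] \<in> L)"
definition sg :: "'a list \<Rightarrow> 'a list" where "sg w = tl (w @ [nx w])"
definition p :: "nat \<Rightarrow> nat" where "p n = card (Ln n)"
definition D :: "nat \<Rightarrow> nat" where "D n = p (Suc n) - p n"

lemma finite_Ln[simp]: "finite (Ln n)"
proof -
  have "Ln n \<subseteq> {xs. set xs \<subseteq> (UNIV::'a set) \<and> length xs = n}" by (auto simp: Ln_def)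
  moreover have "finite {xs. set xs \<subseteq> (UNIV::'a set) \<and> length xs = n}"
    by (rule finite_lists_length_eq) simp
  ultimately show ?thesis by (rule finite_subset)
qed

lemma nx_in: "w \<in> L \<Longrightarrow> w @ [nx w] \<in> L"
  unfolding nx_def using rext by (metis someI_ex)

lemma nx_unique_or_RS: "w \<in> L \<Longrightarrow> w @ [b] \<in> L \<Longrightarrow> b \<noteq> nx w \<Longrightarrow> \<exists>b. b \<noteq> nx w \<and> w @ [b] \<in> L"
  by blast

lemma Ln_ne: "Ln n \<noteq> {}"
proof (induction n)
  case 0 then show ?case using nil by (auto simp: Ln_def)
next
  case (Suc n)
  then obtain w where "w \<in> Ln n" by auto
  then have "w @ [nx w] \<in> Ln (Suc n)" using nx_in by (auto simp: Ln_def)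
  then show ?case by auto
qed

lemma p_pos: "p n > 0"
  using Ln_ne[of n] by (simp add: p_def card_gt_0_iff)

lemma sg_Ln: "w \<in> Ln n \<Longrightarrow> sg w \<in> Ln n"
proof -
  assume w: "w \<in> Ln n"
  have "w @ [nx w] \<in> L" using w nx_in by (auto simp: Ln_def)
  moreover have "w @ [nx w] = [hd (w @ [nx w])] @ tl (w @ [nx w])" by simp
  ultimately have "tl (w @ [nx w]) \<in> L" by (metis suf)
  then show ?thesis using w by (auto simp: Ln_def sg_def)
qed

lemma sgk_Ln: "w \<in> Ln n \<Longrightarrow> (sg ^^ k) w \<in> Ln n"
  by (induction k) (auto simp: sg_Ln)

definition ext1 :: "'a list \<Rightarrow> 'a list" where "ext1 w = w @ [nx w]"

lemma ext1_inj: "inj ext1"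
  unfolding ext1_def inj_def by auto

lemma ext1_Ln: "w \<in> Ln n \<Longrightarrow> ext1 w \<in> Ln (Suc n)"
  using nx_in by (auto simp: Ln_def ext1_def)

lemma p_mono_Suc: "p n \<le> p (Suc n)"
proof -
  have "card (ext1 ` Ln n) \<le> card (Ln (Suc n))"
    by (rule card_mono) (auto simp: ext1_Ln)
  moreover have "card (ext1 ` Ln n) = p n"
    unfolding p_def by (rule card_image) (meson ext1_inj inj_on_subset subset_UNIV)
  ultimately show ?thesis by (simp add: p_def)
qed

lemma card_compl_ext1: "card (Ln (Suc n) - ext1 ` Ln n) = D n"
proof -
  have "ext1 ` Ln n \<subseteq> Ln (Suc n)" by (auto simp: ext1_Ln)
  moreover have "card (ext1 ` Ln n) = p n"
    unfolding p_def by (rule card_image) (meson ext1_inj inj_on_subset subset_UNIV)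
  ultimately show ?thesis by (simp add: card_Diff_subset D_def p_def finite_subset)
qed

definition NL :: "nat \<Rightarrow> 'a list set" where "NL n = {w \<in> Ln n. \<forall>a. a # w \<notin> L}"

lemma card_NL: "card (NL n) \<le> 1"
  using lext[of n] by (simp add: NL_def Ln_def conj_assoc)

lemma sg_ext1: "sg w = tl (ext1 w)" by (simp add: sg_def ext1_def)

lemma card_nonimage: "card (Ln n - sg ` Ln n) \<le> D n + 1"
proof -
  define N1 where "N1 = (Ln n - sg ` Ln n) - NL n"
  define e where "e u = (SOME a. a # u \<in> L) # u" for u
  have "Ln n - sg ` Ln n \<subseteq> N1 \<union> NL n" by (auto simp: N1_def)
  then have "card (Ln n - sg ` Ln n) \<le> card (N1 \<union> NL n)"
    by (intro card_mono) (auto simp: NL_def N1_def)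
  also have "\<dots> \<le> card N1 + card (NL n)" by (rule card_Un_le)
  also have "card N1 \<le> D n"
  proof -
    have "e ` N1 \<subseteq> Ln (Suc n) - ext1 ` Ln n"
    proof
      fix x assume "x \<in> e ` N1"
      then obtain u where u: "u \<in> N1" "x = e u" by auto
      then have "\<exists>a. a # u \<in> L" "u \<in> Ln n" by (auto simp: N1_def NL_def)
      then have xL: "x \<in> Ln (Suc n)" using u by (auto simp: e_def Ln_def intro: someI_ex)
      moreover have "x \<notin> ext1 ` Ln n"
      proof
        assume "x \<in> ext1 ` Ln n"
        then obtain w where w: "w \<in> Ln n" "x = ext1 w" by auto
        then have "u = sg w" using u unfolding sg_ext1 e_def by (metis list.sel(3))
        then show False using u w by (auto simp: N1_def)
      qed
      ultimately show "x \<in> Ln (Suc n) - ext1 ` Ln n" by auto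
    qed
    moreover have "inj_on e N1" unfolding e_def inj_on_def by auto
    ultimately have "card N1 \<le> card (Ln (Suc n) - ext1 ` Ln n)"
      by (metis card_image card_mono finite_Diff finite_Ln)
    then show ?thesis using card_compl_ext1 by simp
  qed
  finally show ?thesis using card_NL[of n] by simp
qed

lemma preimage_bound:
  assumes "S \<subseteq> Ln n"
  shows "\<bar>int (card {v \<in> Ln n. sg v \<in> S}) - int (card S)\<bar> \<le> int (D n) + 1"
proof -
  have low: "card T \<le> card {v \<in> Ln n. sg v \<in> T} + (D n + 1)" if T: "T \<subseteq> Ln n" for T
  proof -
    have "T \<subseteq> (Ln n - sg ` Ln n) \<union> sg ` {v \<in> Ln n. sg v \<in> T}" using T by auto
    then have "card T \<le> card ((Ln n - sg ` Ln n) \<union> sg ` {v \<in> Ln n. sg v \<in> T})"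
      by (intro card_mono) auto
    also have "\<dots> \<le> card (Ln n - sg ` Ln n) + card (sg ` {v \<in> Ln n. sg v \<in> T})"
      by (rule card_Un_le)
    also have "card (sg ` {v \<in> Ln n. sg v \<in> T}) \<le> card {v \<in> Ln n. sg v \<in> T}"
      by (rule card_image_le) simp
    finally show ?thesis using card_nonimage[of n] by simp
  qed
  have A: "card S \<le> card {v \<in> Ln n. sg v \<in> S} + (D n + 1)" using low assms by blast
  have B: "card (Ln n - S) \<le> card {v \<in> Ln n. sg v \<in> Ln n - S} + (D n + 1)" using low by blast
  have c1: "card (Ln n - S) = card (Ln n) - card S"
    using assms by (simp add: card_Diff_subset finite_subset)
  have "{v \<in> Ln n. sg v \<in> Ln n - S} = Ln n - {v \<in> Ln n. sg v \<in> S}"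
    using sg_Ln by auto
  then have c2: "card {v \<in> Ln n. sg v \<in> Ln n - S} = card (Ln n) - card {v \<in> Ln n. sg v \<in> S}"
    by (simp add: card_Diff_subset)
  have "card S \<le> card (Ln n)" using assms by (simp add: card_mono)
  moreover have "card {v \<in> Ln n. sg v \<in> S} \<le> card (Ln n)" by (simp add: card_mono)
  ultimately show ?thesis using A B c1 c2 by linarith
qed

lemma preimage_bound_iter:
  assumes "S \<subseteq> Ln n"
  shows "\<bar>int (card {v \<in> Ln n. (sg ^^ k) v \<in> S}) - int (card S)\<bar> \<le> int k * (int (D n) + 1)"
proof (induction k)
  case 0
  have "{v \<in> Ln n. (sg ^^ 0) v \<in> S} = S" using assms by auto
  then show ?case by simp
next
  case (Suc k)
  define T where "T = {v \<in> Ln n. (sg ^^ k) v \<in> S}"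
  have "{v \<in> Ln n. (sg ^^ Suc k) v \<in> S} = {v \<in> Ln n. sg v \<in> T}"
    unfolding T_def by (auto simp: funpow_swap1 sg_Ln)
  moreover have "\<bar>int (card {v \<in> Ln n. sg v \<in> T}) - int (card T)\<bar> \<le> int (D n) + 1"
    by (rule preimage_bound) (auto simp: T_def)
  ultimately show ?case using Suc.IH unfolding T_def by (simp add: algebra_simps)
qed

lemma preimage_upper:
  assumes "S \<subseteq> Ln n"
  shows "card {v \<in> Ln n. (sg ^^ k) v \<in> S} \<le> card S + k * (D n + 1)"
proof -
  have "int (card {v \<in> Ln n. (sg ^^ k) v \<in> S}) \<le> int (card S + k * (D n + 1))"
    using preimage_bound_iter[OF assms, of k] by (simp add: abs_le_iff algebra_simps)
  then show ?thesis by linarith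
qed

definition RS :: "nat \<Rightarrow> 'a list set" where "RS n = {w \<in> Ln n. \<exists>b. b \<noteq> nx w \<and> w @ [b] \<in> L}"
definition LS :: "nat \<Rightarrow> 'a list set" where "LS n = {w \<in> Ln n. \<exists>a a'. a \<noteq> a' \<and> a # w \<in> L \<and> a' # w \<in> L}"

lemma card_RS: "card (RS n) \<le> D n"
proof -
  define e where "e w = w @ [SOME b. b \<noteq> nx w \<and> w @ [b] \<in> L]" for w
  have "e ` RS n \<subseteq> Ln (Suc n) - ext1 ` Ln n"
  proof
    fix x assume "x \<in> e ` RS n"
    then obtain w where w: "w \<in> RS n" "x = e w" by auto
    let ?b = "SOME b. b \<noteq> nx w \<and> w @ [b] \<in> L"
    have "\<exists>b. b \<noteq> nx w \<and> w @ [b] \<in> L" using w(1) unfolding RS_def by auto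
    then have b: "?b \<noteq> nx w \<and> w @ [?b] \<in> L" by (rule someI_ex)
    then have "x \<in> Ln (Suc n)" using w by (auto simp: e_def Ln_def RS_def)
    moreover have "x \<notin> ext1 ` Ln n" using b w by (auto simp: e_def ext1_def)
    ultimately show "x \<in> Ln (Suc n) - ext1 ` Ln n" by auto
  qed
  moreover have "inj_on e (RS n)" unfolding e_def inj_on_def by auto
  ultimately have "card (RS n) \<le> card (Ln (Suc n) - ext1 ` Ln n)"
    by (metis card_image card_mono finite_Diff finite_Ln)
  then show ?thesis using card_compl_ext1 by simp
qed

lemma card_LS: "card (LS n) \<le> D n + 1"
proof -
  define pl where "pl w = (SOME a. a # w \<in> L)" for w
  define e1 where "e1 w = pl w # w" for w
  define e2 where "e2 w = (SOME a'. a' \<noteq> pl w \<and> a' # w \<in> L) # w" for w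
  have pl: "pl w # w \<in> L" if "\<exists>a. a # w \<in> L" for w
    using that unfolding pl_def by (rule someI_ex)
  have e2: "(SOME a'. a' \<noteq> pl w \<and> a' # w \<in> L) \<noteq> pl w \<and> (SOME a'. a' \<noteq> pl w \<and> a' # w \<in> L) # w \<in> L"
    if "w \<in> LS n" for w
  proof -
    from that obtain a a' where "a \<noteq> a'" "a # w \<in> L" "a' # w \<in> L" by (auto simp: LS_def)
    then have "\<exists>a'. a' \<noteq> pl w \<and> a' # w \<in> L" by metis
    then show ?thesis by (rule someI_ex)
  qed
  have s1: "e1 ` (Ln n - NL n) \<subseteq> Ln (Suc n)"
    using pl by (auto simp: e1_def Ln_def NL_def)
  have s2: "e2 ` LS n \<subseteq> Ln (Suc n)"
    using e2 by (auto simp: e2_def Ln_def LS_def)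
  have disj: "e1 ` (Ln n - NL n) \<inter> e2 ` LS n = {}"
    using e2 unfolding e1_def e2_def by (auto) (metis)
  have i1: "inj_on e1 (Ln n - NL n)" unfolding e1_def inj_on_def by auto
  have i2: "inj_on e2 (LS n)" unfolding e2_def inj_on_def by auto
  have "card (e1 ` (Ln n - NL n) \<union> e2 ` LS n) \<le> p (Suc n)"
    unfolding p_def by (rule card_mono) (use s1 s2 in auto)
  moreover have "card (e1 ` (Ln n - NL n) \<union> e2 ` LS n) = card (Ln n - NL n) + card (LS n)"
  proof -
    have fL: "finite (LS n)" by (rule finite_subset[of _ "Ln n"]) (auto simp: LS_def)
    have "card (e1 ` (Ln n - NL n) \<union> e2 ` LS n) = card (e1 ` (Ln n - NL n)) + card (e2 ` LS n)"
      by (rule card_Un_disjoint) (use disj fL in auto)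
    then show ?thesis by (simp add: card_image i1 i2)
  qed
  moreover have "card (Ln n - NL n) = p n - card (NL n)"
    unfolding p_def by (rule card_Diff_subset) (auto simp: NL_def intro: finite_subset)
  moreover have "card (NL n) \<le> p n" unfolding p_def by (rule card_mono) (auto simp: NL_def)
  ultimately show ?thesis using card_NL[of n] unfolding D_def by linarith
qed

end

context lang
begin

definition Mw :: "'a list \<Rightarrow> nat \<Rightarrow> 'a list" where
  "Mw v m = map (\<lambda>k. nx ((sg ^^ k) v)) [0..<m]"

lemma walk_drop: "drop m (v @ Mw v m) = (sg ^^ m) v"
proof (induction m)
  case 0 then show ?case by (simp add: Mw_def)
next
  case (Suc m)
  have "v @ Mw v (Suc m) = (v @ Mw v m) @ [nx ((sg ^^ m) v)]" by (simp add: Mw_def)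
  moreover have "drop (Suc m) ((v @ Mw v m) @ [nx ((sg ^^ m) v)]) = tl (drop m ((v @ Mw v m) @ [nx ((sg ^^ m) v)]))"
    by (simp only: tl_drop drop_Suc)
  moreover have "drop m ((v @ Mw v m) @ [nx ((sg ^^ m) v)]) = drop m (v @ Mw v m) @ [nx ((sg ^^ m) v)]"
    by (simp add: Mw_def)
  ultimately have "drop (Suc m) (v @ Mw v (Suc m)) = tl (drop m (v @ Mw v m) @ [nx ((sg ^^ m) v)])"
    by simp
  also have "\<dots> = sg ((sg ^^ m) v)" unfolding Suc.IH by (rule sg_def[symmetric])
  finally show ?case by simp
qed

lemma walk: "m \<le> length v \<Longrightarrow> (sg ^^ m) v = drop m v @ Mw v m"
  using walk_drop[of m v] by simp

lemma walk_L:
  assumes v: "v \<in> Ln n" and nors: "\<forall>k<K. (sg ^^ k) v \<notin> RS n"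
  shows "v @ Mw v K \<in> L"
  using nors
proof (induction K)
  case 0 then show ?case using v by (simp add: Mw_def Ln_def)
next
  case (Suc K)
  define w where "w = v @ Mw v K"
  have wL: "w \<in> L" using Suc by (simp add: w_def)
  then have wb: "w @ [nx w] \<in> L" by (rule nx_in)
  have "w @ [nx w] = take K w @ (drop K w @ [nx w])" by simp
  then have "drop K w @ [nx w] \<in> L" using wb suf by metis
  moreover have "drop K w = (sg ^^ K) v" unfolding w_def by (rule walk_drop)
  ultimately have "(sg ^^ K) v @ [nx w] \<in> L" by simp
  moreover have "(sg ^^ K) v \<notin> RS n" using Suc.prems by simp
  moreover have "(sg ^^ K) v \<in> Ln n" using v by (rule sgk_Ln)
  ultimately have "nx w = nx ((sg ^^ K) v)" unfolding RS_def by blast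
  then have "v @ Mw v (Suc K) = w @ [nx w]" by (simp add: w_def Mw_def)
  then show ?case using wb by simp
qed

definition X :: "nat \<Rightarrow> 'a list \<Rightarrow> int \<Rightarrow> 'a" where
  "X n v i = (if 0 \<le> i then nx ((sg ^^ nat i) v) else if - int n \<le> i then v ! nat (int n + i) else undefined)"

lemma X_shift:
  assumes v: "v \<in> Ln n" and i: "- int n \<le> i"
  shows "X n (sg v) i = X n v (i + 1)"
proof (cases "0 \<le> i")
  case True
  then have "nat (i + 1) = Suc (nat i)" by simp
  then show ?thesis using True by (simp add: X_def funpow_swap1)
next
  case False
  define k where "k = nat (int n + i)"
  have lv: "length v = n" using v by (simp add: Ln_def)
  have k: "k < n" using False i by (simp add: k_def)
  have "X n (sg v) i = (sg v) ! k" using False i by (simp add: X_def k_def)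
  also have "\<dots> = (v @ [nx v]) ! Suc k" using lv k by (simp add: sg_def nth_tl)
  also have "\<dots> = X n v (i + 1)"
  proof (cases "i = -1")
    case True
    then have "Suc k = n" using i by (simp add: k_def)
    then show ?thesis using True lv by (simp add: X_def nth_append)
  next
    case False2: False
    then have "\<not> 0 \<le> i + 1" "- int n \<le> i + 1" using False i by auto
    moreover have "nat (int n + (i + 1)) = Suc k" using False2 False i by (simp add: k_def)
    moreover have "Suc k < n" using False2 False i by (simp add: k_def)
    ultimately show ?thesis using k lv by (simp add: X_def nth_append)
  qed
  finally show ?thesis .
qed

lemma X_walk:
  assumes v: "v \<in> Ln n" and i: "- int n \<le> i" "i < int K"
  shows "X n v i = (v @ Mw v K) ! nat (int n + i)"
proof -
  have lv: "length v = n" using v by (simp add: Ln_def)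
  show ?thesis
  proof (cases "0 \<le> i")
    case True
    then have "nat (int n + i) = n + nat i" by simp
    then show ?thesis using True i lv by (simp add: X_def nth_append Mw_def)
  next
    case False
    then have "nat (int n + i) < n" using i by simp
    then show ?thesis using False i lv by (simp add: X_def nth_append)
  qed
qed

definition win :: "(int \<Rightarrow> 'a) \<Rightarrow> int \<Rightarrow> nat \<Rightarrow> 'a list" where
  "win x j k = map (\<lambda>i. x (j + int i)) [0..<k]"

lemma factor_L:
  assumes "u \<in> L" shows "take k (drop j u) \<in> L"
proof -
  have "u = take j u @ (take k (drop j u) @ drop k (drop j u))" by (metis append_take_drop_id)
  then show ?thesis using assms pre suf by metis
qed

lemma win_X_L:
  assumes v: "v \<in> Ln n" and j: "- int n \<le> j" and nors: "\<forall>k'<nat (j + int k). (sg ^^ k') v \<notin> RS n"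
  shows "win (X n v) j k \<in> L"
proof -
  define K where "K = nat (j + int k)"
  have lv: "length v = n" using v by (simp add: Ln_def)
  define u where "u = v @ Mw v K"
  have wL: "u \<in> L" using walk_L[OF v] nors by (simp add: K_def u_def)
  have len: "length u = n + K" using lv by (simp add: Mw_def u_def)
  have "win (X n v) j k = take k (drop (nat (int n + j)) u)"
  proof (rule nth_equalityI)
    show "length (win (X n v) j k) = length (take k (drop (nat (int n + j)) u))"
      using len j by (simp add: win_def K_def)
  next
    fix i assume "i < length (win (X n v) j k)"
    then have i: "i < k" by (simp add: win_def)
    have "win (X n v) j k ! i = X n v (j + int i)" using i by (simp add: win_def)
    also have "\<dots> = u ! nat (int n + (j + int i))"
      unfolding u_def by (rule X_walk[OF v]) (use j i in \<open>auto simp: K_def\<close>)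
    also have "\<dots> = take k (drop (nat (int n + j)) u) ! i"
    proof -
      have "nat (int n + (j + int i)) = nat (int n + j) + i" using j by simp
      moreover have "nat (int n + j) + i < length u" using len i j by (simp add: K_def)
      ultimately show ?thesis using i by (simp add: nth_take nth_drop)
    qed
    finally show "win (X n v) j k ! i = take k (drop (nat (int n + j)) u) ! i" .
  qed
  then show ?thesis using factor_L[OF wL] by simp
qed

lemma natext_bad_bound:
  assumes j: "- int n \<le> j"
  shows "card {v \<in> Ln n. win (X n v) j k \<notin> L} \<le> nat (j + int k) * (D n + nat (j + int k) * (D n + 1))"
proof -
  define K where "K = nat (j + int k)"
  have "{v \<in> Ln n. win (X n v) j k \<notin> L} \<subseteq> (\<Union>k'\<in>{..<K}. {v \<in> Ln n. (sg ^^ k') v \<in> RS n})"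
    using win_X_L[OF _ j] unfolding K_def by blast
  then have "card {v \<in> Ln n. win (X n v) j k \<notin> L} \<le> card (\<Union>k'\<in>{..<K}. {v \<in> Ln n. (sg ^^ k') v \<in> RS n})"
    by (intro card_mono) auto
  also have "\<dots> \<le> (\<Sum>k'\<in>{..<K}. card {v \<in> Ln n. (sg ^^ k') v \<in> RS n})"
    by (rule card_UN_le) simp
  also have "\<dots> \<le> (\<Sum>k'\<in>{..<K}. D n + K * (D n + 1))"
  proof (rule sum_mono)
    fix k' assume "k' \<in> {..<K}"
    then have "k' * (D n + 1) \<le> K * (D n + 1)" by (intro mult_le_mono1) simp
    moreover have "card {v \<in> Ln n. (sg ^^ k') v \<in> RS n} \<le> card (RS n) + k' * (D n + 1)"
      by (rule preimage_upper) (auto simp: RS_def)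
    ultimately show "card {v \<in> Ln n. (sg ^^ k') v \<in> RS n} \<le> D n + K * (D n + 1)"
      using card_RS[of n] by linarith
  qed
  also have "\<dots> = K * (D n + K * (D n + 1))" by simp
  finally show ?thesis by (simp add: K_def)
qed

end

lemma rooted_iso_sym:
  assumes "rooted_iso (V1, E1, o1) (V2, E2, o2)" "o1 \<in> V1"
  shows "rooted_iso (V2, E2, o2) (V1, E1, o1)"
proof -
  from assms obtain f where f: "bij_betw f V1 V2" "f o1 = o2"
    "\<forall>u\<in>V1. \<forall>w\<in>V1. \<forall>a. (u, a, w) \<in> E1 \<longleftrightarrow> (f u, a, f w) \<in> E2"
    unfolding rooted_iso_def by auto
  define g where "g = inv_into V1 f"
  have g: "bij_betw g V2 V1" unfolding g_def by (rule bij_betw_inv_into[OF f(1)])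
  have fg: "f (g u) = u" if "u \<in> V2" for u
    using that f(1) unfolding g_def by (simp add: bij_betw_def f_inv_into_f)
  have "g o2 = o1" unfolding g_def using f assms(2) by (metis bij_betw_inv_into_left)
  moreover have "\<forall>u\<in>V2. \<forall>w\<in>V2. \<forall>a. (u, a, w) \<in> E2 \<longleftrightarrow> (g u, a, g w) \<in> E1"
  proof (intro ballI allI)
    fix u w a assume u: "u \<in> V2" and w: "w \<in> V2"
    have "g u \<in> V1" "g w \<in> V1" using g u w by (auto simp: bij_betw_def)
    then have "(g u, a, g w) \<in> E1 \<longleftrightarrow> (f (g u), a, f (g w)) \<in> E2" using f(3) by blast
    then show "(u, a, w) \<in> E2 \<longleftrightarrow> (g u, a, g w) \<in> E1" using fg u w by simp
  qed
  ultimately show ?thesis using g unfolding rooted_iso_def by auto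
qed

lemma rooted_iso_trans:
  assumes "rooted_iso (V1, E1, o1) (V2, E2, o2)" "rooted_iso (V2, E2, o2) (V3, E3, o3)"
  shows "rooted_iso (V1, E1, o1) (V3, E3, o3)"
proof -
  from assms(1) obtain f where f: "bij_betw f V1 V2" "f o1 = o2"
    "\<forall>u\<in>V1. \<forall>w\<in>V1. \<forall>a. (u, a, w) \<in> E1 \<longleftrightarrow> (f u, a, f w) \<in> E2"
    unfolding rooted_iso_def by auto
  from assms(2) obtain h where h: "bij_betw h V2 V3" "h o2 = o3"
    "\<forall>u\<in>V2. \<forall>w\<in>V2. \<forall>a. (u, a, w) \<in> E2 \<longleftrightarrow> (h u, a, h w) \<in> E3"
    unfolding rooted_iso_def by auto
  have "bij_betw (h \<circ> f) V1 V3" using f(1) h(1) by (rule bij_betw_trans)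
  moreover have "(h \<circ> f) o1 = o3" using f h by simp
  moreover have "\<forall>u\<in>V1. \<forall>w\<in>V1. \<forall>a. (u, a, w) \<in> E1 \<longleftrightarrow> ((h \<circ> f) u, a, (h \<circ> f) w) \<in> E3"
  proof (intro ballI allI)
    fix u w a assume u: "u \<in> V1" and w: "w \<in> V1"
    have "f u \<in> V2" "f w \<in> V2" using f(1) u w by (auto simp: bij_betw_def)
    then show "(u, a, w) \<in> E1 \<longleftrightarrow> ((h \<circ> f) u, a, (h \<circ> f) w) \<in> E3" using f(3) h(3) u w by auto
  qed
  ultimately show ?thesis unfolding rooted_iso_def by auto
qed

lemma ball_eq: "ball G v r = ({w \<in> fst G. \<exists>k\<le>r. (v, w) \<in> (adj_rel (snd G)) ^^ k},
  {(u, a, w) \<in> snd G. u \<in> {w \<in> fst G. \<exists>k\<le>r. (v, w) \<in> (adj_rel (snd G)) ^^ k} \<and>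
     w \<in> {w \<in> fst G. \<exists>k\<le>r. (v, w) \<in> (adj_rel (snd G)) ^^ k}}, v)"
  unfolding ball_def Let_def by simp

lemma ball_E_gen: "fst (snd (ball G v r)) = {(u, a, w) \<in> snd G. u \<in> fst (ball G v r) \<and> w \<in> fst (ball G v r)}"
  by (simp add: ball_def Let_def)

lemma ball_V_gen: "fst (ball G v r) = {w \<in> fst G. \<exists>k\<le>r. (v, w) \<in> (adj_rel (snd G)) ^^ k}"
  by (simp add: ball_def Let_def)

lemma ball_root_gen: "snd (snd (ball G v r)) = v"
  by (simp add: ball_def Let_def)

lemma line_adj: "(u, w) \<in> adj_rel (snd (line_graph x)) \<longleftrightarrow> w = u + 1 \<or> w = u - 1"
  unfolding adj_rel_def line_graph_def by auto

lemma line_reach1: "(0, j) \<in> (adj_rel (snd (line_graph x))) ^^ m \<Longrightarrow> \<bar>j\<bar> \<le> int m"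
proof (induction m arbitrary: j)
  case 0 then show ?case by simp
next
  case (Suc m)
  then obtain u where "(0, u) \<in> (adj_rel (snd (line_graph x))) ^^ m" "(u, j) \<in> adj_rel (snd (line_graph x))"
    by auto
  then have "\<bar>u\<bar> \<le> int m" "j = u + 1 \<or> j = u - 1" using Suc.IH line_adj by auto
  then show ?case by auto
qed

lemma line_reach2: "(0, int d) \<in> (adj_rel (snd (line_graph x))) ^^ d \<and> (0, - int d) \<in> (adj_rel (snd (line_graph x))) ^^ d"
proof (induction d)
  case 0 then show ?case by simp
next
  case (Suc d)
  have "(int d, int (Suc d)) \<in> adj_rel (snd (line_graph x))" "(- int d, - int (Suc d)) \<in> adj_rel (snd (line_graph x))"
    by (auto simp: line_adj)
  then show ?case using Suc by (meson relpow_Suc_I)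
qed

lemma line_ball_V: "fst (ball (line_graph x) 0 r) = {- int r..int r}"
proof -
  have eq: "(\<exists>k\<le>r. (0, j) \<in> (adj_rel (snd (line_graph x))) ^^ k) \<longleftrightarrow> j \<in> {- int r..int r}" for j
  proof
    assume "\<exists>k\<le>r. (0, j) \<in> (adj_rel (snd (line_graph x))) ^^ k"
    then show "j \<in> {- int r..int r}" using line_reach1 by fastforce
  next
    assume j: "j \<in> {- int r..int r}"
    show "\<exists>k\<le>r. (0, j) \<in> (adj_rel (snd (line_graph x))) ^^ k"
    proof (cases "0 \<le> j")
      case True
      then show ?thesis using j line_reach2[of "nat j" x] by (intro exI[of _ "nat j"]) auto
    next
      case False
      then show ?thesis using j line_reach2[of "nat (- j)" x] by (intro exI[of _ "nat (- j)"]) auto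
    qed
  qed
  have "fst (ball (line_graph x) 0 r) = {j. \<exists>k\<le>r. (0, j) \<in> (adj_rel (snd (line_graph x))) ^^ k}"
    unfolding ball_def Let_def by (simp add: line_graph_def)
  then show ?thesis using eq by blast
qed

lemma line_ball_E: "i \<in> {- int r..int r} \<Longrightarrow> j \<in> {- int r..int r} \<Longrightarrow>
   (i, a, j) \<in> fst (snd (ball (line_graph x) 0 r)) \<longleftrightarrow> j = i + 1 \<and> a = x i"
  using line_ball_V[of x r] by (simp add: ball_E_gen line_graph_def) blast

lemma line_ball_root: "snd (snd (ball (line_graph x) 0 r)) = 0"
  unfolding ball_def Let_def by simp

context lang
begin

lemma rauzy_V: "fst (rauzy L n) = Ln n" by (simp add: rauzy_def Ln_def)

lemma rauzy_E: "(u, b, w) \<in> snd (rauzy L n) \<longleftrightarrow>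
   (\<exists>a u'. u = a # u' \<and> w = u' @ [b] \<and> a # u' @ [b] \<in> L \<and> length u' + 1 = n)"
  by (auto simp: rauzy_def)

lemma out_arc:
  assumes u: "u \<in> Ln n" and n: "1 \<le> n"
  shows "(u, nx u, sg u) \<in> snd (rauzy L n)"
proof -
  have lu: "length u = n" using u by (simp add: Ln_def)
  then have ue: "u = hd u # tl u" using n by (cases u) auto
  have "u @ [nx u] \<in> L" using u nx_in by (simp add: Ln_def)
  then have "hd u # tl u @ [nx u] \<in> L" using ue by (metis append_Cons)
  moreover have "sg u = tl u @ [nx u]" using ue by (metis sg_def list.sel(3) append_Cons)
  ultimately show ?thesis unfolding rauzy_E
    by (intro exI[of _ "hd u"] exI[of _ "tl u"]) (use lu ue n in auto)
qed

lemma out_det: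
  assumes u: "u \<in> Ln n" "u \<notin> RS n" and e: "(u, b, w) \<in> snd (rauzy L n)"
  shows "b = nx u \<and> w = sg u"
proof -
  from e obtain a u' where au: "u = a # u'" "w = u' @ [b]" "a # u' @ [b] \<in> L" unfolding rauzy_E by blast
  then have "u @ [b] \<in> L" by simp
  then have b: "b = nx u" using u unfolding RS_def by blast
  then show ?thesis using au by (simp add: sg_def)
qed

lemma in_det:
  assumes u: "u \<in> Ln n" and n: "1 \<le> n" and nls: "sg u \<notin> LS n" and e: "(y, b, sg u) \<in> snd (rauzy L n)"
  shows "y = u \<and> b = nx u"
proof -
  have lu: "length u = n" using u by (simp add: Ln_def)
  then have ue: "u = hd u # tl u" using n by (cases u) auto
  have sgu: "sg u = tl u @ [nx u]" using ue by (metis sg_def list.sel(3) append_Cons)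
  from e obtain a u'' where au: "y = a # u''" "sg u = u'' @ [b]" "a # u'' @ [b] \<in> L"
    unfolding rauzy_E by blast
  have "a # sg u \<in> L" using au by simp
  moreover have "hd u # sg u \<in> L"
  proof -
    have "u @ [nx u] = hd u # sg u" using sgu lu n by (cases u) auto
    then show ?thesis using nx_in[of u] u by (simp add: Ln_def)
  qed
  moreover have "sg u \<in> Ln n" using u by (rule sg_Ln)
  ultimately have "a = hd u" using nls unfolding LS_def by blast
  moreover have "u'' = tl u" "b = nx u" using au(2) sgu by auto
  ultimately show ?thesis using au ue by simp
qed

definition Gd :: "nat \<Rightarrow> nat \<Rightarrow> 'a list set" where
  "Gd n r = {z \<in> Ln n. (\<forall>k \<le> 2*r+2. (sg ^^ k) z \<notin> RS n \<and> (sg ^^ k) z \<notin> LS n) \<and>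
     inj_on (\<lambda>k. (sg ^^ k) z) {..2*r+2}}"

lemma adj_g:
  assumes z: "z \<in> Gd n r" and n: "1 \<le> n" and k: "1 \<le> k" "k \<le> 2*r+1"
  shows "((sg ^^ k) z, w) \<in> adj_rel (snd (rauzy L n)) \<longleftrightarrow> w = (sg ^^ Suc k) z \<or> w = (sg ^^ (k - 1)) z"
proof -
  have zL: "z \<in> Ln n" using z by (simp add: Gd_def)
  have gk: "(sg ^^ k) z \<in> Ln n" "(sg ^^ k) z \<notin> RS n" "(sg ^^ k) z \<notin> LS n"
    using z k zL sgk_Ln by (auto simp: Gd_def)
  have km: "(sg ^^ k) z = sg ((sg ^^ (k - 1)) z)" using k by (metis Suc_diff_le diff_Suc_1 funpow.simps(2) o_apply)
  have gkm: "(sg ^^ (k - 1)) z \<in> Ln n" using zL sgk_Ln by blast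
  show ?thesis
  proof
    assume "((sg ^^ k) z, w) \<in> adj_rel (snd (rauzy L n))"
    then obtain a where "((sg ^^ k) z, a, w) \<in> snd (rauzy L n) \<or> (w, a, (sg ^^ k) z) \<in> snd (rauzy L n)"
      unfolding adj_rel_def by auto
    then show "w = (sg ^^ Suc k) z \<or> w = (sg ^^ (k - 1)) z"
    proof
      assume "((sg ^^ k) z, a, w) \<in> snd (rauzy L n)"
      then have "w = sg ((sg ^^ k) z)" using out_det gk by blast
      then show ?thesis by simp
    next
      assume "(w, a, (sg ^^ k) z) \<in> snd (rauzy L n)"
      then have "(w, a, sg ((sg ^^ (k - 1)) z)) \<in> snd (rauzy L n)" using km by simp
      then have "w = (sg ^^ (k - 1)) z" using in_det[OF gkm n] gk km by auto
      then show ?thesis by simp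
    qed
  next
    assume "w = (sg ^^ Suc k) z \<or> w = (sg ^^ (k - 1)) z"
    then show "((sg ^^ k) z, w) \<in> adj_rel (snd (rauzy L n))"
    proof
      assume "w = (sg ^^ Suc k) z"
      then show ?thesis using out_arc[OF gk(1) n] unfolding adj_rel_def by auto
    next
      assume "w = (sg ^^ (k - 1)) z"
      then show ?thesis using out_arc[OF gkm n] km unfolding adj_rel_def by auto
    qed
  qed
qed

lemma ball_reach1:
  assumes z: "z \<in> Gd n r" and n: "1 \<le> n"
  shows "m \<le> r \<Longrightarrow> ((sg ^^ (r+1)) z, w) \<in> (adj_rel (snd (rauzy L n))) ^^ m \<Longrightarrow>
    \<exists>k. w = (sg ^^ k) z \<and> r + 1 \<le> k + m \<and> k \<le> r + 1 + m"
proof (induction m arbitrary: w)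
  case 0 then show ?case by (intro exI[of _ "r+1"]) auto
next
  case (Suc m)
  then obtain u where u: "((sg ^^ (r+1)) z, u) \<in> (adj_rel (snd (rauzy L n))) ^^ m"
    "(u, w) \<in> adj_rel (snd (rauzy L n))" by auto
  from Suc.IH[OF _ u(1)] Suc.prems obtain k where k: "u = (sg ^^ k) z" "r + 1 \<le> k + m" "k \<le> r + 1 + m"
    by auto
  then have "1 \<le> k" "k \<le> 2*r+1" using Suc.prems by auto
  then have "w = (sg ^^ Suc k) z \<or> w = (sg ^^ (k - 1)) z" using adj_g[OF z n] u(2) k(1) by blast
  then show ?case
  proof
    assume "w = (sg ^^ Suc k) z" then show ?thesis using k by (intro exI[of _ "Suc k"]) auto
  next
    assume "w = (sg ^^ (k - 1)) z" then show ?thesis using k \<open>1 \<le> k\<close> by (intro exI[of _ "k - 1"]) auto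
  qed
qed


lemma ball_reach2:
  assumes zL: "z \<in> Ln n" and n: "1 \<le> n"
  shows "d \<le> r + 1 \<Longrightarrow> ((sg ^^ (r+1)) z, (sg ^^ (r+1+d)) z) \<in> (adj_rel (snd (rauzy L n))) ^^ d \<and>
      ((sg ^^ (r+1)) z, (sg ^^ (r+1-d)) z) \<in> (adj_rel (snd (rauzy L n))) ^^ d"
proof (induction d)
  case 0 then show ?case by simp
next
  case (Suc d)
  have a1: "((sg ^^ (r+1+d)) z, (sg ^^ (r+1+Suc d)) z) \<in> adj_rel (snd (rauzy L n))"
    using out_arc[OF sgk_Ln[OF zL] n, of "r+1+d"] unfolding adj_rel_def by auto
  have e: "(sg ^^ (r+1-d)) z = sg ((sg ^^ (r+1-Suc d)) z)" using Suc.prems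
    by (metis Suc_diff_Suc Suc_le_lessD funpow.simps(2) o_apply)
  have a2: "((sg ^^ (r+1-d)) z, (sg ^^ (r+1-Suc d)) z) \<in> adj_rel (snd (rauzy L n))"
    using out_arc[OF sgk_Ln[OF zL] n, of "r+1-Suc d"] e unfolding adj_rel_def by auto
  show ?case using Suc a1 a2 by (meson Suc_leD relpow_Suc_I)
qed

abbreviation "gz z k \<equiv> (sg ^^ k) z"

lemma rauzy_ball_V:
  assumes z: "z \<in> Gd n r" and n: "1 \<le> n"
  shows "fst (ball (rauzy L n) (gz z (r+1)) r) = gz z ` {1..2*r+1}"
proof -
  have zL: "z \<in> Ln n" using z by (simp add: Gd_def)
  show ?thesis
  proof (rule set_eqI)
    fix w
    show "w \<in> fst (ball (rauzy L n) (gz z (r+1)) r) \<longleftrightarrow> w \<in> gz z ` {1..2*r+1}"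
    proof
      assume "w \<in> fst (ball (rauzy L n) (gz z (r+1)) r)"
      then obtain m where "m \<le> r" "(gz z (r+1), w) \<in> (adj_rel (snd (rauzy L n))) ^^ m"
        unfolding ball_V_gen by auto
      then obtain k where "w = gz z k" "r + 1 \<le> k + m" "k \<le> r + 1 + m"
        using ball_reach1[OF z n] by blast
      then show "w \<in> gz z ` {1..2*r+1}" using \<open>m \<le> r\<close> by auto
    next
      assume "w \<in> gz z ` {1..2*r+1}"
      then obtain k where k: "w = gz z k" "1 \<le> k" "k \<le> 2*r+1" by auto
      have wL: "w \<in> Ln n" using k sgk_Ln[OF zL] by simp
      show "w \<in> fst (ball (rauzy L n) (gz z (r+1)) r)"
      proof (cases "r + 1 \<le> k")
        case True
        define d where "d = k - (r+1)"
        have "d \<le> r + 1" "k = r + 1 + d" using k True by (auto simp: d_def)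
        then show ?thesis using ball_reach2[OF zL n, of d r] wL k unfolding ball_V_gen rauzy_V
          using \<open>d \<le> r + 1\<close> k(3) by (intro CollectI conjI exI[of _ d]) auto
      next
        case False
        define d where "d = (r+1) - k"
        have "d \<le> r + 1" "k = r + 1 - d" "d \<le> r" using k False by (auto simp: d_def)
        then show ?thesis using ball_reach2[OF zL n, of d r] wL k unfolding ball_V_gen rauzy_V
          by (intro CollectI conjI exI[of _ d]) auto
      qed
    qed
  qed
qed

lemma rauzy_ball_E:
  assumes z: "z \<in> Gd n r" and n: "1 \<le> n" and k: "k \<in> {1..2*r+1}" and k': "k' \<in> {1..2*r+1}"
  shows "(gz z k, a, gz z k') \<in> fst (snd (ball (rauzy L n) (gz z (r+1)) r)) \<longleftrightarrow> a = nx (gz z k) \<and> k' = Suc k"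
proof -
  have zL: "z \<in> Ln n" using z by (simp add: Gd_def)
  have inj: "inj_on (gz z) {..2*r+2}" using z by (simp add: Gd_def)
  have gk: "gz z k \<in> Ln n" "gz z k \<notin> RS n" using z k sgk_Ln[OF zL] by (auto simp: Gd_def)
  have m1: "gz z k \<in> fst (ball (rauzy L n) (gz z (r+1)) r)" "gz z k' \<in> fst (ball (rauzy L n) (gz z (r+1)) r)"
    unfolding rauzy_ball_V[OF z n] using k k' by blast+
  have "(gz z k, a, gz z k') \<in> fst (snd (ball (rauzy L n) (gz z (r+1)) r)) \<longleftrightarrow>
        (gz z k, a, gz z k') \<in> snd (rauzy L n)"
    unfolding ball_E_gen[of "rauzy L n"] using m1 by blast
  also have "\<dots> \<longleftrightarrow> a = nx (gz z k) \<and> gz z k' = sg (gz z k)"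
  proof
    assume "(gz z k, a, gz z k') \<in> snd (rauzy L n)"
    then show "a = nx (gz z k) \<and> gz z k' = sg (gz z k)" by (rule out_det[OF gk])
  next
    assume "a = nx (gz z k) \<and> gz z k' = sg (gz z k)"
    then show "(gz z k, a, gz z k') \<in> snd (rauzy L n)" using out_arc[OF gk(1) n] by simp
  qed
  also have "gz z k' = sg (gz z k) \<longleftrightarrow> k' = Suc k"
  proof
    assume h: "gz z k' = sg (gz z k)"
    have "gz z k' = gz z (Suc k)" using h by simp
    moreover have "k' \<in> {..2*r+2}" "Suc k \<in> {..2*r+2}" using k k' by auto
    ultimately show "k' = Suc k" using inj_onD[OF inj, of k' "Suc k"] by simp
  qed simp
  finally show ?thesis .
qed

lemma X_gz:
  assumes zL: "z \<in> Ln n" and rn: "r + 1 \<le> n" and i: "- int r \<le> i" "i < int r"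
  shows "X n (gz z (r+1)) i = nx (gz z (nat (i + int r + 1)))"
proof (cases "0 \<le> i")
  case True
  have fa: "(sg ^^ nat i) ((sg ^^ (r+1)) z) = (sg ^^ (nat i + (r+1))) z" by (simp only: funpow_add comp_def)
  have "X n (gz z (r+1)) i = nx ((sg ^^ nat i) ((sg ^^ (r+1)) z))" using True by (simp only: X_def if_True)
  then have "X n (gz z (r+1)) i = nx ((sg ^^ (nat i + (r+1))) z)" using fa by simp
  moreover have "nat i + (r+1) = nat (i + int r + 1)" using True by simp
  ultimately show ?thesis by (simp only:)
next
  case False
  have lz: "length z = n" using zL by (simp add: Ln_def)
  have w: "gz z (r+1) = drop (r+1) z @ Mw z (r+1)" using walk[of "r+1" z] lz rn by simp
  have "X n (gz z (r+1)) i = gz z (r+1) ! nat (int n + i)" using False i rn by (simp add: X_def)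
  also have "\<dots> = Mw z (r+1) ! (nat (int n + i) - (n - (r+1)))"
  proof -
    have "n - (r+1) \<le> nat (int n + i)" using i rn by arith
    then show ?thesis using w lz by (simp add: nth_append)
  qed
  also have "nat (int n + i) - (n - (r+1)) = nat (i + int r + 1)" using False i rn by simp
  also have "Mw z (r+1) ! nat (i + int r + 1) = nx (gz z (nat (i + int r + 1)))"
  proof -
    have "nat (i + int r + 1) < r + 1" using False i by arith
    then show ?thesis by (simp add: Mw_def del: upt_Suc)
  qed
  finally show ?thesis .
qed

lemma ball_iso:
  assumes z: "z \<in> Gd n r" and rn: "2*r+2 \<le> n"
  shows "rooted_iso (ball (line_graph (X n (gz z (r+1)))) 0 r) (ball (rauzy L n) (gz z (r+1)) r)"
proof -
  have n: "1 \<le> n" using rn by simp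
  have zL: "z \<in> Ln n" using z by (simp add: Gd_def)
  have inj: "inj_on (gz z) {..2*r+2}" using z by (simp add: Gd_def)
  define f where "f i = gz z (nat (i + int r + 1))" for i
  define x where "x = X n (gz z (r+1))"
  have img: "(\<lambda>i. nat (i + int r + 1)) ` {- int r..int r} = {1..2*r+1}"
  proof (rule set_eqI)
    fix k show "k \<in> (\<lambda>i. nat (i + int r + 1)) ` {- int r..int r} \<longleftrightarrow> k \<in> {1..2*r+1}"
    proof
      assume "k \<in> {1..2*r+1}"
      then show "k \<in> (\<lambda>i. nat (i + int r + 1)) ` {- int r..int r}"
        by (intro image_eqI[of _ _ "int k - int r - 1"]) auto
    qed auto
  qed
  have injn: "inj_on (\<lambda>i. nat (i + int r + 1)) {- int r..int r}" by (auto simp: inj_on_def)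
  have bij: "bij_betw f {- int r..int r} (gz z ` {1..2*r+1})"
  proof -
    have "inj_on (gz z) {1..2*r+1}" using inj by (rule inj_on_subset) auto
    then have "bij_betw (gz z) {1..2*r+1} (gz z ` {1..2*r+1})" by (simp add: inj_on_imp_bij_betw)
    moreover have "bij_betw (\<lambda>i. nat (i + int r + 1)) {- int r..int r} {1..2*r+1}"
      using injn img by (simp add: bij_betw_def)
    ultimately show ?thesis unfolding f_def using bij_betw_trans[of "\<lambda>i. nat (i + int r + 1)" _ _ "gz z"]
      by (simp add: comp_def)
  qed
  have edges: "(i, a, j) \<in> fst (snd (ball (line_graph x) 0 r)) \<longleftrightarrow>
      (f i, a, f j) \<in> fst (snd (ball (rauzy L n) (gz z (r+1)) r))"
    if i: "i \<in> {- int r..int r}" and j: "j \<in> {- int r..int r}" for i j a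
  proof -
    have ki: "nat (i + int r + 1) \<in> {1..2*r+1}" "nat (j + int r + 1) \<in> {1..2*r+1}" using i j by auto
    have "(f i, a, f j) \<in> fst (snd (ball (rauzy L n) (gz z (r+1)) r)) \<longleftrightarrow>
          a = nx (gz z (nat (i + int r + 1))) \<and> nat (j + int r + 1) = Suc (nat (i + int r + 1))"
      unfolding f_def by (rule rauzy_ball_E[OF z n ki])
    also have "\<dots> \<longleftrightarrow> j = i + 1 \<and> a = x i"
    proof
      assume h: "a = nx (gz z (nat (i + int r + 1))) \<and> nat (j + int r + 1) = Suc (nat (i + int r + 1))"
      then have "j = i + 1" using i j by auto
      moreover have "x i = nx (gz z (nat (i + int r + 1)))"
        unfolding x_def by (rule X_gz[OF zL]) (use rn i j \<open>j = i + 1\<close> in auto)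
      ultimately show "j = i + 1 \<and> a = x i" using h by simp
    next
      assume h: "j = i + 1 \<and> a = x i"
      moreover have "x i = nx (gz z (nat (i + int r + 1)))"
        unfolding x_def by (rule X_gz[OF zL]) (use rn i j h in auto)
      ultimately show "a = nx (gz z (nat (i + int r + 1))) \<and> nat (j + int r + 1) = Suc (nat (i + int r + 1))"
        using i by auto
    qed
    finally show ?thesis using line_ball_E[OF i j] by simp
  qed
  obtain V1 E1 o1 where b1: "ball (line_graph x) 0 r = (V1, E1, o1)" by (metis prod_cases3)
  obtain V2 E2 o2 where b2: "ball (rauzy L n) (gz z (r+1)) r = (V2, E2, o2)" by (metis prod_cases3)
  have V1: "V1 = {- int r..int r}" using line_ball_V[of x r] b1 by simp
  have V2: "V2 = gz z ` {1..2*r+1}" using rauzy_ball_V[OF z n] b2 by simp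
  have o1: "o1 = 0" using ball_root_gen[of "line_graph x" 0 r] b1 by simp
  have o2: "o2 = gz z (r+1)" using ball_root_gen[of "rauzy L n" "gz z (r+1)" r] b2 by simp
  have E: "\<forall>u\<in>V1. \<forall>w\<in>V1. \<forall>a. (u, a, w) \<in> E1 \<longleftrightarrow> (f u, a, f w) \<in> E2"
    using edges b1 b2 V1 by simp
  have "nat (int r + 1) = Suc r" using nat_int[of "Suc r"] by simp
  then have "f o1 = o2" using o1 o2 by (simp add: f_def)
  then have "rooted_iso (V1, E1, o1) (V2, E2, o2)"
    unfolding rooted_iso_def using bij E V1 V2 by auto
  then show ?thesis using b1 b2 by (simp add: x_def)
qed


end

lemma iso_transfer:
  assumes "rooted_iso G1 G2" "snd (snd G1) \<in> fst G1"
  shows "rooted_iso G1 H \<longleftrightarrow> rooted_iso G2 H"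
proof -
  obtain V1 E1 o1 where g1: "G1 = (V1, E1, o1)" by (metis prod_cases3)
  obtain V2 E2 o2 where g2: "G2 = (V2, E2, o2)" by (metis prod_cases3)
  obtain V3 E3 o3 where h: "H = (V3, E3, o3)" by (metis prod_cases3)
  have i12: "rooted_iso (V1, E1, o1) (V2, E2, o2)" using assms g1 g2 by simp
  have o1: "o1 \<in> V1" using assms g1 by simp
  have i21: "rooted_iso (V2, E2, o2) (V1, E1, o1)" by (rule rooted_iso_sym[OF i12 o1])
  show ?thesis unfolding g1 g2 h using rooted_iso_trans i12 i21 by metis
qed

context lang
begin

lemma card_nonimage_iter: "card (Ln n - (sg ^^ m) ` Ln n) \<le> m * (D n + 1)"
proof (induction m)
  case 0
  have "Ln n - (sg ^^ 0) ` Ln n = {}" by simp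
  then show ?case by simp
next
  case (Suc m)
  have "Ln n - (sg ^^ Suc m) ` Ln n \<subseteq> (Ln n - sg ` Ln n) \<union> sg ` (Ln n - (sg ^^ m) ` Ln n)"
  proof
    fix u assume u: "u \<in> Ln n - (sg ^^ Suc m) ` Ln n"
    show "u \<in> (Ln n - sg ` Ln n) \<union> sg ` (Ln n - (sg ^^ m) ` Ln n)"
    proof (cases "u \<in> sg ` Ln n")
      case True
      then obtain w where w: "w \<in> Ln n" "u = sg w" by auto
      have "w \<notin> (sg ^^ m) ` Ln n"
      proof
        assume "w \<in> (sg ^^ m) ` Ln n"
        then obtain y where "y \<in> Ln n" "w = (sg ^^ m) y" by auto
        then have "u = (sg ^^ Suc m) y" using w by simp
        then show False using u \<open>y \<in> Ln n\<close> by auto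
      qed
      then show ?thesis using w by auto
    qed (use u in auto)
  qed
  then have "card (Ln n - (sg ^^ Suc m) ` Ln n) \<le> card ((Ln n - sg ` Ln n) \<union> sg ` (Ln n - (sg ^^ m) ` Ln n))"
    by (intro card_mono) auto
  also have "\<dots> \<le> card (Ln n - sg ` Ln n) + card (sg ` (Ln n - (sg ^^ m) ` Ln n))"
    by (rule card_Un_le)
  also have "card (sg ` (Ln n - (sg ^^ m) ` Ln n)) \<le> card (Ln n - (sg ^^ m) ` Ln n)"
    by (rule card_image_le) simp
  finally show ?case using Suc.IH card_nonimage[of n] by simp
qed

definition Per :: "nat \<Rightarrow> nat \<Rightarrow> 'a list set" where "Per n l = {u \<in> Ln n. (sg ^^ l) u = u}"

lemma Per_periodic:
  assumes u: "u \<in> Per n l" and l: "l \<le> n" and k: "k + l < n"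
  shows "u ! k = u ! (k + l)"
proof -
  have lu: "length u = n" using u by (simp add: Per_def Ln_def)
  have "u = drop l u @ Mw u l" using u walk[of l u] lu l by (simp add: Per_def)
  then have "u ! k = (drop l u @ Mw u l) ! k" by simp
  also have "\<dots> = u ! (k + l)"
  proof -
    have "k < n - l" using k by simp
    then show ?thesis using lu by (simp add: nth_append add.commute)
  qed
  finally show ?thesis .
qed

lemma card_Per:
  assumes l: "1 \<le> l" "l \<le> n"
  shows "card (Per n l) \<le> CARD('a) ^ l"
proof -
  have inj: "inj_on (take l) (Per n l)"
  proof (rule inj_onI)
    fix u u' assume u: "u \<in> Per n l" and u': "u' \<in> Per n l" and t: "take l u = take l u'"
    have lu: "length u = n" "length u' = n" using u u' by (auto simp: Per_def Ln_def)
    have "\<forall>k. k < n \<longrightarrow> u ! k = u' ! k"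
    proof (intro allI)
      fix k show "k < n \<longrightarrow> u ! k = u' ! k"
      proof (induction k rule: less_induct)
        case (less k)
        show ?case
        proof (cases "k < l")
          case True
          then show ?thesis using t by (metis nth_take)
        next
          case False
          then have "k - l < k" "k - l + l = k" using l by auto
          then show ?thesis using less Per_periodic[OF u l(2), of "k - l"] Per_periodic[OF u' l(2), of "k - l"]
            by auto
        qed
      qed
    qed
    then show "u = u'" using lu by (intro nth_equalityI) auto
  qed
  have "take l ` Per n l \<subseteq> {xs. set xs \<subseteq> (UNIV::'a set) \<and> length xs = l}"
    using l by (auto simp: Per_def Ln_def)
  then have "card (take l ` Per n l) \<le> card {xs. set xs \<subseteq> (UNIV::'a set) \<and> length xs = l}"
    by (intro card_mono) (use finite_lists_length_eq[of "UNIV::'a set" l] in auto)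
  also have "\<dots> = CARD('a) ^ l" using card_lists_length_eq[of "UNIV::'a set" l] by simp
  finally show ?thesis using card_image[OF inj] by simp
qed

definition Cg :: "nat \<Rightarrow> nat" where
  "Cg r = (2*r+3) * (2*r+4) + (2*r+3) * (2*r+3) * (CARD('a) ^ (2*r+2) + (2*r+2))"

lemma card_not_Gd:
  assumes rn: "2*r+2 \<le> n"
  shows "card (Ln n - Gd n r) \<le> Cg r * (D n + 1)"
proof -
  define A where "A k = {z \<in> Ln n. (sg ^^ k) z \<in> RS n \<union> LS n}" for k
  define B where "B ij = {z \<in> Ln n. fst ij < snd ij \<and> (sg ^^ fst ij) z \<in> Per n (snd ij - fst ij)}" for ij
  define K where "K = {..2*r+2}"
  have sub: "Ln n - Gd n r \<subseteq> (\<Union>k\<in>K. A k) \<union> (\<Union>ij\<in>K \<times> K. B ij)"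
  proof
    fix z assume z: "z \<in> Ln n - Gd n r"
    show "z \<in> (\<Union>k\<in>K. A k) \<union> (\<Union>ij\<in>K \<times> K. B ij)"
    proof (cases "\<forall>k \<le> 2*r+2. (sg ^^ k) z \<notin> RS n \<and> (sg ^^ k) z \<notin> LS n")
      case True
      then have "\<not> inj_on (\<lambda>k. (sg ^^ k) z) {..2*r+2}" using z by (auto simp: Gd_def)
      then obtain i j where ij: "i \<in> K" "j \<in> K" "i \<noteq> j" "(sg ^^ i) z = (sg ^^ j) z"
        unfolding inj_on_def K_def by auto
      have "\<exists>i j. i \<in> K \<and> j \<in> K \<and> i < j \<and> (sg ^^ i) z = (sg ^^ j) z"
      proof (cases "i < j")
        case True then show ?thesis using ij by blast
      next
        case False then show ?thesis using ij by (intro exI[of _ j] exI[of _ i]) auto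
      qed
      then obtain i j where ij: "i \<in> K" "j \<in> K" "i < j" "(sg ^^ i) z = (sg ^^ j) z" by blast
      have "(sg ^^ (j - i)) ((sg ^^ i) z) = (sg ^^ (j - i + i)) z" by (simp only: funpow_add comp_def)
      then have "(sg ^^ (j - i)) ((sg ^^ i) z) = (sg ^^ j) z" using ij(3) by simp
      then have "(sg ^^ i) z \<in> Per n (j - i)" using ij(4) z sgk_Ln by (auto simp: Per_def)
      then have "z \<in> B (i, j)" using z ij by (auto simp: B_def)
      then show ?thesis using ij by blast
    next
      case False
      then obtain k where "k \<le> 2*r+2" "(sg ^^ k) z \<in> RS n \<union> LS n" by auto
      then have "z \<in> A k" "k \<in> K" using z by (auto simp: A_def K_def)
      then show ?thesis by blast
    qed
  qed
  have fK: "finite K" by (simp add: K_def)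
  have cA: "card (A k) \<le> (2*r+4) * (D n + 1)" if "k \<in> K" for k
  proof -
    have "card (A k) \<le> card (RS n \<union> LS n) + k * (D n + 1)"
      unfolding A_def by (rule preimage_upper) (auto simp: RS_def LS_def)
    also have "card (RS n \<union> LS n) \<le> card (RS n) + card (LS n)" by (rule card_Un_le)
    also have "k * (D n + 1) \<le> (2*r+2) * (D n + 1)" using that by (intro mult_le_mono1) (simp add: K_def)
    finally show ?thesis using card_RS[of n] card_LS[of n] by (simp add: algebra_simps)
  qed
  have cB: "card (B ij) \<le> (CARD('a) ^ (2*r+2) + (2*r+2)) * (D n + 1)" if "ij \<in> K \<times> K" for ij
  proof (cases "fst ij < snd ij")
    case True
    define i j where "i = fst ij" and "j = snd ij"
    have ij: "i < j" "j \<le> 2*r+2" "i \<le> 2*r+2" using True that by (auto simp: i_def j_def K_def)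
    have "B ij = {z \<in> Ln n. (sg ^^ i) z \<in> Per n (j - i)}" using True by (simp add: B_def i_def j_def)
    then have "card (B ij) \<le> card (Per n (j - i)) + i * (D n + 1)"
      by (simp only:) (rule preimage_upper, auto simp: Per_def)
    also have "card (Per n (j - i)) \<le> CARD('a) ^ (j - i)" using ij rn by (intro card_Per) auto
    also have "CARD('a) ^ (j - i) \<le> CARD('a) ^ (2*r+2)"
      by (rule power_increasing) (use ij in auto)
    also have "i * (D n + 1) \<le> (2*r+2) * (D n + 1)" using ij by (intro mult_le_mono1) simp
    finally have "card (B ij) \<le> CARD('a) ^ (2*r+2) + (2*r+2) * (D n + 1)" by simp
    also have "\<dots> \<le> (CARD('a) ^ (2*r+2) + (2*r+2)) * (D n + 1)" by (simp add: algebra_simps)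
    finally show ?thesis .
  next
    case False
    then have "B ij = {}" by (auto simp: B_def)
    then show ?thesis by simp
  qed
  have "card (Ln n - Gd n r) \<le> card ((\<Union>k\<in>K. A k) \<union> (\<Union>ij\<in>K \<times> K. B ij))"
    using sub by (intro card_mono) (auto simp: A_def B_def fK)
  also have "\<dots> \<le> card (\<Union>k\<in>K. A k) + card (\<Union>ij\<in>K \<times> K. B ij)" by (rule card_Un_le)
  also have "card (\<Union>k\<in>K. A k) \<le> (\<Sum>k\<in>K. card (A k))" by (rule card_UN_le[OF fK])
  also have "\<dots> \<le> (\<Sum>k\<in>K. (2*r+4) * (D n + 1))" by (rule sum_mono) (use cA in auto)
  also have "card (\<Union>ij\<in>K \<times> K. B ij) \<le> (\<Sum>ij\<in>K \<times> K. card (B ij))" by (rule card_UN_le) (simp add: fK)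
  also have "\<dots> \<le> (\<Sum>ij\<in>K \<times> K. (CARD('a) ^ (2*r+2) + (2*r+2)) * (D n + 1))" by (rule sum_mono) (use cB in auto)
  finally show ?thesis by (simp add: K_def Cg_def card_cartesian_product algebra_simps)
qed

lemma bad_bound:
  assumes rn: "2*r+2 \<le> n"
  shows "card {v \<in> Ln n. \<not> (rooted_iso (ball (rauzy L n) v r) H \<longleftrightarrow> rooted_iso (ball (line_graph (X n v)) 0 r) H)}
    \<le> (r + 1 + Cg r) * (D n + 1)"
proof -
  let ?Bad = "{v \<in> Ln n. \<not> (rooted_iso (ball (rauzy L n) v r) H \<longleftrightarrow> rooted_iso (ball (line_graph (X n v)) 0 r) H)}"
  have good: "rooted_iso (ball (rauzy L n) v r) H \<longleftrightarrow> rooted_iso (ball (line_graph (X n v)) 0 r) H"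
    if "v \<in> (sg ^^ (r+1)) ` Gd n r" for v
  proof -
    from that obtain z where z: "z \<in> Gd n r" "v = (sg ^^ (r+1)) z" by auto
    have "rooted_iso (ball (line_graph (X n v)) 0 r) (ball (rauzy L n) v r)"
      using ball_iso[OF z(1) rn] z(2) by simp
    moreover have "snd (snd (ball (line_graph (X n v)) 0 r)) \<in> fst (ball (line_graph (X n v)) 0 r)"
      by (simp add: ball_root_gen line_ball_V)
    ultimately show ?thesis using iso_transfer by metis
  qed
  have "?Bad \<subseteq> (Ln n - (sg ^^ (r+1)) ` Ln n) \<union> (sg ^^ (r+1)) ` (Ln n - Gd n r)"
    using good by blast
  then have "card ?Bad \<le> card ((Ln n - (sg ^^ (r+1)) ` Ln n) \<union> (sg ^^ (r+1)) ` (Ln n - Gd n r))"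
    by (intro card_mono) auto
  also have "\<dots> \<le> card (Ln n - (sg ^^ (r+1)) ` Ln n) + card ((sg ^^ (r+1)) ` (Ln n - Gd n r))"
    by (rule card_Un_le)
  also have "card ((sg ^^ (r+1)) ` (Ln n - Gd n r)) \<le> card (Ln n - Gd n r)"
    by (rule card_image_le) simp
  also have "card (Ln n - Gd n r) \<le> Cg r * (D n + 1)" by (rule card_not_Gd[OF rn])
  also have "card (Ln n - (sg ^^ (r+1)) ` Ln n) \<le> (r+1) * (D n + 1)" by (rule card_nonimage_iter)
  finally show ?thesis by (simp add: algebra_simps)
qed

end

abbreviation CS :: "int \<Rightarrow> 'a measure" where "CS \<equiv> (\<lambda>_. count_space UNIV)"

lemma sets_PiM_finite_Pow:
  assumes J: "finite J"
  shows "sets (PiM J (\<lambda>_::int. count_space (UNIV::'a::finite set))) = Pow (PiE J (\<lambda>_. UNIV))"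
proof
  show "sets (PiM J (\<lambda>_::int. count_space (UNIV::'a set))) \<subseteq> Pow (PiE J (\<lambda>_. UNIV))"
    using sets.sets_into_space by (fastforce simp: space_PiM)
next
  show "Pow (PiE J (\<lambda>_. UNIV)) \<subseteq> sets (PiM J (\<lambda>_::int. count_space (UNIV::'a set)))"
  proof
    fix A assume A: "A \<in> Pow (PiE J (\<lambda>_::int. UNIV::'a set))"
    have fin: "finite (PiE J (\<lambda>_::int. UNIV::'a set))" using J by (simp add: finite_PiE)
    then have fA: "finite A" using A by (auto intro: finite_subset)
    have "A = (\<Union>y\<in>A. PiE J (\<lambda>i. {y i}))"
    proof
      show "A \<subseteq> (\<Union>y\<in>A. PiE J (\<lambda>i. {y i}))" using A by (auto simp: PiE_iff)
      show "(\<Union>y\<in>A. PiE J (\<lambda>i. {y i})) \<subseteq> A"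
      proof
        fix x assume "x \<in> (\<Union>y\<in>A. PiE J (\<lambda>i. {y i}))"
        then obtain y where y: "y \<in> A" "x \<in> PiE J (\<lambda>i. {y i})" by auto
        have "x = y" using y A by (intro extensionalityI[of _ J]) (auto simp: PiE_iff)
        then show "x \<in> A" using y by simp
      qed
    qed
    moreover have "(\<Union>y\<in>A. PiE J (\<lambda>i. {y i})) \<in> sets (PiM J (\<lambda>_::int. count_space (UNIV::'a set)))"
      using fA J by (intro sets.finite_UN sets_PiM_I_finite) auto
    ultimately show "A \<in> sets (PiM J (\<lambda>_::int. count_space (UNIV::'a set)))" by simp
  qed
qed

lemma seq_compact: "compact_space (product_topology (\<lambda>_::int. discrete_topology (UNIV::'a::finite set)) UNIV)"
  by (simp add: compact_space_product_topology compact_space_discrete_topology)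

lemma prod_emb_closed:
  assumes J: "finite J" and X: "X \<subseteq> PiE J (\<lambda>_. UNIV)"
  shows "closedin (product_topology (\<lambda>_::int. discrete_topology (UNIV::'a::finite set)) UNIV)
     (prod_emb UNIV (\<lambda>_. count_space UNIV) J X)"
proof -
  have fX: "finite X" using X J by (auto intro: finite_subset simp: finite_PiE)
  have eq: "prod_emb UNIV (\<lambda>_::int. count_space (UNIV::'a set)) J X =
    \<Union>((\<lambda>y. PiE UNIV (\<lambda>j. if j \<in> J then {y j} else UNIV)) ` X)"
  proof
    show "prod_emb UNIV (\<lambda>_::int. count_space (UNIV::'a set)) J X \<subseteq> \<Union>((\<lambda>y. PiE UNIV (\<lambda>j. if j \<in> J then {y j} else UNIV)) ` X)"
    proof
      fix x assume "x \<in> prod_emb UNIV (\<lambda>_::int. count_space (UNIV::'a set)) J X"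
      then have "restrict x J \<in> X" by (simp add: prod_emb_def)
      then show "x \<in> \<Union>((\<lambda>y. PiE UNIV (\<lambda>j. if j \<in> J then {y j} else UNIV)) ` X)"
        by (intro UN_I[of "restrict x J"]) (auto simp: PiE_iff)
    qed
    show "\<Union>((\<lambda>y. PiE UNIV (\<lambda>j. if j \<in> J then {y j} else UNIV)) ` X) \<subseteq> prod_emb UNIV (\<lambda>_::int. count_space (UNIV::'a set)) J X"
    proof
      fix x assume "x \<in> \<Union>((\<lambda>y. PiE UNIV (\<lambda>j. if j \<in> J then {y j} else UNIV)) ` X)"
      then obtain y where y0: "y \<in> X" "x \<in> PiE UNIV (\<lambda>j. if j \<in> J then {y j} else UNIV)" by auto
      have "\<forall>j\<in>J. x j = y j"
      proof
        fix j assume "j \<in> J"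
        have "\<forall>i. x i \<in> (if i \<in> J then {y i} else UNIV)" using y0(2) by (simp add: PiE_iff)
        then have "x j \<in> (if j \<in> J then {y j} else UNIV)" by (rule spec)
        then show "x j = y j" using \<open>j \<in> J\<close> by simp
      qed
      note y = y0(1) this
      have "restrict x J = y" using y X by (intro extensionalityI[of _ J]) (auto simp: PiE_iff)
      then show "x \<in> prod_emb UNIV (\<lambda>_::int. count_space (UNIV::'a set)) J X" using y by (simp add: prod_emb_def)
    qed
  qed
  show ?thesis unfolding eq
    by (rule closedin_Union) (use fX in \<open>auto simp: closedin_product_topology\<close>)
qed

theorem construct_measure:
  fixes q :: "int set \<Rightarrow> (int \<Rightarrow> 'a::finite) \<Rightarrow> real"
  assumes q_nonneg: "\<And>J y. 0 \<le> q J y"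
    and q_sum: "\<And>J. finite J \<Longrightarrow> (\<Sum>y\<in>PiE J (\<lambda>_. UNIV). q J y) = 1"
    and q_cons: "\<And>J H y. finite H \<Longrightarrow> J \<subseteq> H \<Longrightarrow> y \<in> PiE J (\<lambda>_. UNIV) \<Longrightarrow>
        q J y = (\<Sum>z\<in>{z\<in>PiE H (\<lambda>_. UNIV). restrict z J = y}. q H z)"
  shows "\<exists>\<rho>. prob_space \<rho> \<and> sets \<rho> = sets (PiM UNIV (\<lambda>_::int. count_space (UNIV::'a set))) \<and>
     (\<forall>J Y. finite J \<longrightarrow> Y \<subseteq> PiE J (\<lambda>_. UNIV) \<longrightarrow>
        emeasure \<rho> (prod_emb UNIV (\<lambda>_. count_space UNIV) J Y) = (\<Sum>y\<in>Y. ennreal (q J y)))"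
proof -
  define P where "P J = point_measure (PiE J (\<lambda>_::int. UNIV::'a set)) (\<lambda>y. ennreal (q J y))" for J
  have finPiE: "finite J \<Longrightarrow> finite (PiE J (\<lambda>_::int. UNIV::'a set))" for J by (simp add: finite_PiE)
  have sets_P: "finite J \<Longrightarrow> sets (P J) = sets (PiM J (\<lambda>_::int. count_space (UNIV::'a set)))" for J
    by (simp add: P_def sets_point_measure sets_PiM_finite_Pow)
  have emP: "finite J \<Longrightarrow> Y \<subseteq> PiE J (\<lambda>_. UNIV) \<Longrightarrow> emeasure (P J) Y = (\<Sum>y\<in>Y. ennreal (q J y))" for J Y
    unfolding P_def by (rule emeasure_point_measure_finite) (simp_all add: finPiE)
  have P_cons: "P J = distr (P H) (PiM J (\<lambda>_. count_space UNIV)) (\<lambda>f. restrict f J)"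
    if JH: "J \<subseteq> H" "finite H" "H \<subseteq> UNIV" for J H
  proof -
    have fJ: "finite J" using JH by (auto intro: finite_subset)
    have meas: "(\<lambda>f. restrict f J) \<in> measurable (P H) (PiM J (\<lambda>_::int. count_space (UNIV::'a set)))"
      using measurable_restrict_subset[OF JH(1), of "\<lambda>_::int. count_space (UNIV::'a set)"]
      by (simp add: measurable_cong_sets[OF sets_P[OF JH(2)] refl])
    show "P J = distr (P H) (PiM J (\<lambda>_. count_space UNIV)) (\<lambda>f. restrict f J)"
    proof (rule measure_eqI)
      show "sets (P J) = sets (distr (P H) (PiM J (\<lambda>_. count_space UNIV)) (\<lambda>f. restrict f J))"
        using sets_P[OF fJ] by simp
    next
      fix A assume "A \<in> sets (P J)"
      then have A: "A \<subseteq> PiE J (\<lambda>_. UNIV)" using sets_P[OF fJ] sets_PiM_finite_Pow[OF fJ] by auto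
      have spH: "space (P H) = PiE H (\<lambda>_. UNIV)" by (simp add: P_def space_point_measure)
      have "emeasure (distr (P H) (PiM J (\<lambda>_. count_space UNIV)) (\<lambda>f. restrict f J)) A =
          emeasure (P H) ((\<lambda>f. restrict f J) -` A \<inter> space (P H))"
        by (rule emeasure_distr[OF meas]) (use A sets_PiM_finite_Pow[OF fJ] in auto)
      also have "(\<lambda>f. restrict f J) -` A \<inter> space (P H) = {z \<in> PiE H (\<lambda>_. UNIV). restrict z J \<in> A}"
        using spH by auto
      also have "emeasure (P H) {z \<in> PiE H (\<lambda>_. UNIV). restrict z J \<in> A} =
          (\<Sum>z\<in>{z \<in> PiE H (\<lambda>_. UNIV). restrict z J \<in> A}. ennreal (q H z))"
        by (rule emP[OF JH(2)]) auto
      also have "\<dots> = (\<Sum>y\<in>A. \<Sum>z\<in>{z \<in> {z \<in> PiE H (\<lambda>_. UNIV). restrict z J \<in> A}. restrict z J = y}. ennreal (q H z))"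
        by (rule sum.group[symmetric]) (use finPiE[OF JH(2)] finPiE[OF fJ] A in \<open>auto intro: finite_subset\<close>)
      also have "\<dots> = (\<Sum>y\<in>A. ennreal (q J y))"
      proof (rule sum.cong[OF refl])
        fix y assume y: "y \<in> A"
        have "{z \<in> {z \<in> PiE H (\<lambda>_. UNIV). restrict z J \<in> A}. restrict z J = y} = {z\<in>PiE H (\<lambda>_. UNIV). restrict z J = y}"
          using y by auto
        then have "(\<Sum>z\<in>{z \<in> {z \<in> PiE H (\<lambda>_. UNIV). restrict z J \<in> A}. restrict z J = y}. ennreal (q H z)) =
            ennreal (\<Sum>z\<in>{z\<in>PiE H (\<lambda>_. UNIV). restrict z J = y}. q H z)"
          using q_nonneg by (simp add: sum_ennreal)
        also have "\<dots> = ennreal (q J y)" using q_cons[OF JH(2) JH(1)] y A by auto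
        finally show "(\<Sum>z\<in>{z \<in> {z \<in> PiE H (\<lambda>_. UNIV). restrict z J \<in> A}. restrict z J = y}. ennreal (q H z)) = ennreal (q J y)" .
      qed
      also have "\<dots> = emeasure (P J) A" using emP[OF fJ A] by simp
      finally show "emeasure (P J) A = emeasure (distr (P H) (PiM J (\<lambda>_. count_space UNIV)) (\<lambda>f. restrict f J)) A" by (rule sym)
    qed
  qed
  have P_prob: "prob_space (P J)" if J: "finite J" "J \<subseteq> UNIV" for J
    proof (rule prob_spaceI)
      have "space (P J) = PiE J (\<lambda>_. UNIV)" by (simp add: P_def space_point_measure)
      then have "emeasure (P J) (space (P J)) = (\<Sum>y\<in>PiE J (\<lambda>_. UNIV). ennreal (q J y))"
        using emP[OF J(1)] by simp
      also have "\<dots> = ennreal (\<Sum>y\<in>PiE J (\<lambda>_. UNIV). q J y)" using q_nonneg by (simp add: sum_ennreal)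
      also have "\<dots> = 1" using q_sum[OF J(1)] by simp
      finally show "emeasure (P J) (space (P J)) = 1" .
    qed
  interpret pf: projective_family UNIV P "\<lambda>_::int. count_space (UNIV::'a set)"
    by (rule projective_family.intro) (use P_cons P_prob in auto)
  have cont: "(\<Inter>i. prod_emb UNIV (\<lambda>_. count_space UNIV) (J i) (X i)) \<noteq> {}"
    if J: "\<And>i. J i \<subseteq> UNIV" "incseq J" "\<And>i. finite (J i)" and X: "\<And>i. X i \<in> sets (PiM (J i) (\<lambda>_. count_space UNIV))"
      and dec: "decseq (\<lambda>i. prod_emb UNIV (\<lambda>_. count_space UNIV) (J i) (X i))"
      and pos: "0 < (INF i. emeasure (P (J i)) (X i))"
    for J :: "nat \<Rightarrow> int set" and X :: "nat \<Rightarrow> (int \<Rightarrow> 'a) set"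
  proof (rule compact_space_imp_nest[OF seq_compact])
    fix i
    have Xs: "X i \<subseteq> PiE (J i) (\<lambda>_. UNIV)" using X[of i] sets_PiM_finite_Pow[OF J(3)[of i]] by auto
    show "closedin (product_topology (\<lambda>_::int. discrete_topology (UNIV::'a set)) UNIV)
        (prod_emb UNIV (\<lambda>_. count_space UNIV) (J i) (X i))"
      by (rule prod_emb_closed[OF J(3) Xs])
    have "0 < emeasure (P (J i)) (X i)" using pos by (metis INF_lower UNIV_I order_less_le_trans)
    then have "X i \<noteq> {}" by auto
    then obtain y where y: "y \<in> X i" by auto
    then have "restrict y (J i) = y" using Xs by (auto simp: PiE_iff extensional_restrict)
    then have "y \<in> prod_emb UNIV (\<lambda>_. count_space UNIV) (J i) (X i)" using y by (simp add: prod_emb_def)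
    then show "prod_emb UNIV (\<lambda>_. count_space UNIV) (J i) (X i) \<noteq> {}" by auto
  qed (use dec in auto)
  have lim: "emeasure pf.lim (prod_emb UNIV (\<lambda>_. count_space UNIV) J Y) = (\<Sum>y\<in>Y. ennreal (q J y))"
    if "finite J" "Y \<subseteq> PiE J (\<lambda>_. UNIV)" for J Y
  proof -
    have "Y \<in> sets (PiM J (\<lambda>_::int. count_space (UNIV::'a set)))" using that sets_PiM_finite_Pow by auto
    then have "emeasure pf.lim (prod_emb UNIV (\<lambda>_. count_space UNIV) J Y) = emeasure (P J) Y"
      using that by (intro pf.emeasure_lim cont) auto
    then show ?thesis using emP that by simp
  qed
  have "prob_space pf.lim"
  proof (rule prob_spaceI)
    have "space pf.lim = prod_emb UNIV (\<lambda>_::int. count_space (UNIV::'a set)) {} (PiE {} (\<lambda>_. UNIV))"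
      by (simp add: space_PiM prod_emb_def) (auto simp: restrict_def)
    then have "emeasure pf.lim (space pf.lim) = (\<Sum>y\<in>PiE {} (\<lambda>_::int. UNIV::'a set). ennreal (q {} y))"
      using lim[of "{}" "PiE {} (\<lambda>_. UNIV)"] by simp
    also have "\<dots> = ennreal (\<Sum>y\<in>PiE {} (\<lambda>_::int. UNIV::'a set). q {} y)" using q_nonneg by (simp add: sum_ennreal)
    also have "\<dots> = 1" using q_sum[of "{}"] by simp
    finally show "emeasure pf.lim (space pf.lim) = 1" .
  qed
  then show ?thesis using lim by (intro exI[of _ pf.lim]) auto
qed

lemma diag_convergent:
  fixes a :: "'b::countable \<Rightarrow> nat \<Rightarrow> real"
  assumes bnd: "\<And>l n. \<bar>a l n\<bar> \<le> B"
  shows "\<exists>t. strict_mono t \<and> (\<forall>l. convergent (\<lambda>k. a l (t k)))"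
proof -
  define P where "P k r = convergent (\<lambda>m. a (from_nat k) (r m))" for k and r :: "nat \<Rightarrow> nat"
  interpret subseqs P
  proof
    fix k and s :: "nat \<Rightarrow> nat" assume "strict_mono s"
    have "bounded (range (\<lambda>m. a (from_nat k) (s m)))"
      using bnd by (intro boundedI[of _ B]) auto
    then obtain l r where r: "strict_mono r" "((\<lambda>m. a (from_nat k) (s m)) \<circ> r) \<longlonglongrightarrow> l"
      using bounded_imp_convergent_subsequence by blast
    then have "P k (s \<circ> r)" unfolding P_def convergent_def by (auto simp: comp_def)
    then show "\<exists>r'. strict_mono r' \<and> P k (s \<circ> r')" using r(1) by blast
  qed
  have "P k (diagseq \<circ> (+) (Suc k))" for k
  proof (rule diagseq_holds)
    fix r s :: "nat \<Rightarrow> nat" and n assume "strict_mono r" "P n s"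
    then show "P n (s \<circ> r)" unfolding P_def using convergent_subseq_convergent[of "\<lambda>m. a (from_nat n) (s m)" r]
      by (simp add: comp_def)
  qed
  then have "convergent (\<lambda>m. a (from_nat k) (diagseq m))" for k
  proof -
    have "convergent (\<lambda>m. a (from_nat k) (diagseq (Suc k + m)))"
      using \<open>P k (diagseq \<circ> (+) (Suc k))\<close> unfolding P_def by (simp only: comp_def)
    then have h: "convergent (\<lambda>m. a (from_nat k) (diagseq (m + Suc k)))" by (simp only: add.commute)
    show ?thesis
      by (rule convergent_ignore_initial_segment[of "\<lambda>m. a (from_nat k) (diagseq m)" "Suc k", THEN iffD1, OF h])
  qed
  then have "convergent (\<lambda>m. a l (diagseq m))" for l
    using from_nat_to_nat[of l] by metis
  then show ?thesis using subseq_diagseq by blast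
qed

lemma subseq_principle:
  fixes a :: "nat \<Rightarrow> real"
  assumes "\<And>s::nat\<Rightarrow>nat. strict_mono s \<Longrightarrow> \<exists>t::nat\<Rightarrow>nat. strict_mono t \<and> (\<lambda>k. a (s (t k))) \<longlonglongrightarrow> c"
  shows "a \<longlonglongrightarrow> c"
proof (rule ccontr)
  assume "\<not> a \<longlonglongrightarrow> c"
  then have "\<not> (\<forall>e>0. \<forall>\<^sub>F n in sequentially. dist (a n) c < e)" unfolding tendsto_iff .
  then obtain e where e: "e > 0" "\<not> (\<forall>\<^sub>F n in sequentially. dist (a n) c < e)" by blast
  then have "\<not> (\<exists>N. \<forall>n\<ge>N. dist (a n) c < e)" by (simp add: eventually_sequentially)
  then have "\<forall>N. \<exists>n\<ge>N. dist (a n) c \<ge> e" by (simp add: not_less)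
  then have "infinite {n. dist (a n) c \<ge> e}" unfolding infinite_nat_iff_unbounded_le by auto
  from infinite_enumerate[OF \<open>infinite {n. dist (a n) c \<ge> e}\<close>]
  obtain s :: "nat \<Rightarrow> nat" where s0: "strict_mono s \<and> (\<forall>n. s n \<in> {n. dist (a n) c \<ge> e})" ..
  then have s: "strict_mono s" "\<forall>n. s n \<in> {n. dist (a n) c \<ge> e}" by auto
  obtain t where t: "strict_mono t" "(\<lambda>k. a (s (t k))) \<longlonglongrightarrow> c" using assms[OF s(1)] by blast
  have "\<forall>\<^sub>F k in sequentially. dist (a (s (t k))) c < e" by (rule tendstoD[OF t(2) e(1)])
  then obtain N where "\<forall>k\<ge>N. dist (a (s (t k))) c < e" by (auto simp: eventually_sequentially)
  then have "dist (a (s (t N))) c < e" by simp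
  moreover have "dist (a (s (t N))) c \<ge> e" using s(2) by simp
  ultimately show False by simp
qed

lemma ratio_to_zero:
  fixes p :: "nat \<Rightarrow> nat"
  assumes pos: "\<And>n. p n > 0" and mono: "\<And>n. p n \<le> p (Suc n)"
    and ratio: "(\<lambda>n. real (p (Suc n)) / real (p n)) \<longlonglongrightarrow> 1"
    and unb: "\<not> bdd_above (range p)"
  shows "(\<lambda>n. real (p (Suc n) - p n + 1) / real (p n)) \<longlonglongrightarrow> 0"
proof -
  have m: "mono p" using mono by (simp add: mono_iff_le_Suc)
  have "\<exists>N. \<forall>n\<ge>N. r < real (p n)" for r :: real
  proof -
    have "\<exists>N. p N > nat \<lceil>r\<rceil>"
    proof (rule ccontr)
      assume "\<not> (\<exists>N. p N > nat \<lceil>r\<rceil>)"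
      then have "\<forall>N. p N \<le> nat \<lceil>r\<rceil>" by (simp add: not_less)
      then have "bdd_above (range p)" by (intro bdd_aboveI2[of _ _ "nat \<lceil>r\<rceil>"]) auto
      then show False using unb by simp
    qed
    then obtain N where N: "p N > nat \<lceil>r\<rceil>" by blast
    have "r < real (p n)" if "n \<ge> N" for n
    proof -
      have "p N \<le> p n" using m that by (simp add: monoD)
      moreover have "r \<le> real (nat \<lceil>r\<rceil>)" by (rule real_nat_ceiling_ge)
      moreover have "real (nat \<lceil>r\<rceil>) < real (p N)" using N by simp
      ultimately show ?thesis by linarith
    qed
    then show ?thesis by blast
  qed
  then have inv: "(\<lambda>n. inverse (real (p n))) \<longlonglongrightarrow> 0" by (rule LIMSEQ_inverse_zero)
  have eq: "real (p (Suc n) - p n + 1) / real (p n) = (real (p (Suc n)) / real (p n) - 1) + inverse (real (p n))" for n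
    using pos[of n] mono[of n] by (simp add: field_simps of_nat_diff)
  have "(\<lambda>n. (real (p (Suc n)) / real (p n) - 1) + inverse (real (p n))) \<longlonglongrightarrow> (1 - 1) + 0"
    by (intro tendsto_intros ratio inv)
  then show ?thesis unfolding eq by simp
qed

definition loc :: "int set \<Rightarrow> (int \<Rightarrow> 'a) set \<Rightarrow> bool" where
  "loc W A \<longleftrightarrow> (\<forall>x x'. (\<forall>i\<in>W. x i = x' i) \<longrightarrow> (x \<in> A \<longleftrightarrow> x' \<in> A))"

lemma loc_eq:
  assumes "loc W A"
  shows "A = {x. restrict x W \<in> (\<lambda>x. restrict x W) ` A}"
proof
  show "A \<subseteq> {x. restrict x W \<in> (\<lambda>x. restrict x W) ` A}" by auto
  show "{x. restrict x W \<in> (\<lambda>x. restrict x W) ` A} \<subseteq> A"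
  proof
    fix x assume "x \<in> {x. restrict x W \<in> (\<lambda>x. restrict x W) ` A}"
    then obtain x' where x': "x' \<in> A" "restrict x W = restrict x' W" by auto
    then have "\<forall>i\<in>W. x i = x' i" by (metis restrict_apply')
    then show "x \<in> A" using assms x'(1) unfolding loc_def by blast
  qed
qed

lemma restrict_img_PiE: "(\<lambda>x. restrict x W) ` A \<subseteq> PiE W (\<lambda>_. UNIV)"
  by auto

lemma prod_emb_UNIV_eq: "prod_emb UNIV (\<lambda>_::int. count_space (UNIV::'a set)) W Y = {x. restrict x W \<in> Y}"
  by (auto simp: prod_emb_def)

lemma space_seq: "space (PiM UNIV (\<lambda>_::int. count_space (UNIV::'a set))) = UNIV"
  by (simp add: space_PiM)

lemma loc_sets:
  assumes "loc W A" "finite W"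
  shows "A \<in> sets (PiM UNIV (\<lambda>_::int. count_space (UNIV::'a::finite set)))"
proof -
  have "(\<lambda>x. restrict x W) ` A \<in> sets (PiM W (\<lambda>_::int. count_space (UNIV::'a set)))"
    using sets_PiM_finite_Pow[OF assms(2)] by auto
  then have "prod_emb UNIV (\<lambda>_::int. count_space (UNIV::'a set)) W ((\<lambda>x. restrict x W) ` A) \<in> sets (PiM UNIV (\<lambda>_::int. count_space (UNIV::'a set)))"
    by (intro measurable_prod_emb) auto
  then show ?thesis using loc_eq[OF assms(1)] by (simp add: prod_emb_UNIV_eq)
qed

lemma card_diff_pred:
  assumes "finite S"
  shows "\<bar>real (card {v \<in> S. P v}) - real (card {v \<in> S. Q v})\<bar> \<le> real (card {v \<in> S. \<not> (P v \<longleftrightarrow> Q v)})"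
proof -
  have "card {v \<in> S. P v} \<le> card ({v \<in> S. Q v} \<union> {v \<in> S. \<not> (P v \<longleftrightarrow> Q v)})"
    by (rule card_mono) (use assms in auto)
  also have "\<dots> \<le> card {v \<in> S. Q v} + card {v \<in> S. \<not> (P v \<longleftrightarrow> Q v)}" by (rule card_Un_le)
  finally have a: "card {v \<in> S. P v} \<le> card {v \<in> S. Q v} + card {v \<in> S. \<not> (P v \<longleftrightarrow> Q v)}" .
  have "card {v \<in> S. Q v} \<le> card ({v \<in> S. P v} \<union> {v \<in> S. \<not> (P v \<longleftrightarrow> Q v)})"
    by (rule card_mono) (use assms in auto)
  also have "\<dots> \<le> card {v \<in> S. P v} + card {v \<in> S. \<not> (P v \<longleftrightarrow> Q v)}" by (rule card_Un_le)
  finally have b: "card {v \<in> S. Q v} \<le> card {v \<in> S. P v} + card {v \<in> S. \<not> (P v \<longleftrightarrow> Q v)}" .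
  show ?thesis using a b by linarith
qed

context lang
begin

definition fr :: "nat \<Rightarrow> (int \<Rightarrow> 'a) set \<Rightarrow> real" where
  "fr n A = real (card {v \<in> Ln n. X n v \<in> A}) / real (p n)"

lemma fr_nonneg: "0 \<le> fr n A" by (simp add: fr_def)

lemma fr_le1: "fr n A \<le> 1"
proof -
  have "card {v \<in> Ln n. X n v \<in> A} \<le> p n" unfolding p_def by (rule card_mono) auto
  then show ?thesis using p_pos[of n] by (simp add: fr_def)
qed

lemma fr_group:
  assumes H: "finite H" and JH: "J \<subseteq> H"
  shows "fr n {x. restrict x J = y} = (\<Sum>z\<in>{z\<in>PiE H (\<lambda>_. UNIV). restrict z J = y}. fr n {x. restrict x H = z})"
proof -
  define S where "S = {v \<in> Ln n. restrict (X n v) J = y}"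
  define T where "T = {z\<in>PiE H (\<lambda>_. UNIV::'a set). restrict z J = y}"
  have fT: "finite T" unfolding T_def using H by (simp add: finite_PiE)
  have sub: "(\<lambda>v. restrict (X n v) H) ` S \<subseteq> T"
    using JH by (auto simp: S_def T_def restrict_restrict Int_absorb1)
  have "(\<Sum>z\<in>T. \<Sum>v\<in>{v \<in> S. restrict (X n v) H = z}. (1::nat)) = (\<Sum>v\<in>S. 1)"
    by (rule sum.group) (use fT sub in \<open>auto simp: S_def\<close>)
  moreover have "{v \<in> S. restrict (X n v) H = z} = {v \<in> Ln n. X n v \<in> {x. restrict x H = z}}" if "z \<in> T" for z
    using that JH by (auto simp: S_def T_def restrict_restrict Int_absorb1)
  ultimately have "card S = (\<Sum>z\<in>T. card {v \<in> Ln n. X n v \<in> {x. restrict x H = z}})" by simp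
  then have "real (card S) = (\<Sum>z\<in>T. real (card {v \<in> Ln n. X n v \<in> {x. restrict x H = z}}))"
    by (simp add: of_nat_sum)
  then show ?thesis unfolding fr_def S_def T_def by (simp add: sum_divide_distrib[symmetric])
qed

lemma fr_UNIV: "fr n UNIV = 1"
  using p_pos[of n] Ln_ne[of n] by (simp add: fr_def p_def)

lemma fr_total:
  assumes J: "finite J"
  shows "(\<Sum>y\<in>PiE J (\<lambda>_. UNIV). fr n {x. restrict x J = y}) = 1"
proof -
  have "{x. restrict x {} = (\<lambda>_. undefined)} = (UNIV :: (int \<Rightarrow> 'a) set)" by auto
  then have "fr n {x. restrict x {} = (\<lambda>_. undefined)} = 1" using fr_UNIV by simp
  moreover have "fr n {x. restrict x {} = (\<lambda>_. undefined)} =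
     (\<Sum>z\<in>{z\<in>PiE J (\<lambda>_. UNIV). restrict z {} = (\<lambda>_. undefined)}. fr n {x. restrict x J = z})"
    by (rule fr_group[OF J]) simp
  moreover have "{z\<in>PiE J (\<lambda>_. UNIV::'a set). restrict z {} = (\<lambda>_. undefined)} = PiE J (\<lambda>_. UNIV)" by auto
  ultimately show ?thesis by simp
qed

lemma fr_local:
  assumes W: "finite W" and Y: "Y \<subseteq> PiE W (\<lambda>_. UNIV)"
  shows "fr n {x. restrict x W \<in> Y} = (\<Sum>y\<in>Y. fr n {x. restrict x W = y})"
proof -
  define S where "S = {v \<in> Ln n. restrict (X n v) W \<in> Y}"
  have fY: "finite Y" using W Y by (auto intro: finite_subset simp: finite_PiE)
  have "(\<Sum>y\<in>Y. \<Sum>v\<in>{v \<in> S. restrict (X n v) W = y}. (1::nat)) = (\<Sum>v\<in>S. 1)"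
    by (rule sum.group) (use fY in \<open>auto simp: S_def\<close>)
  moreover have "{v \<in> S. restrict (X n v) W = y} = {v \<in> Ln n. X n v \<in> {x. restrict x W = y}}" if "y \<in> Y" for y
    using that by (auto simp: S_def)
  ultimately have "card S = (\<Sum>y\<in>Y. card {v \<in> Ln n. X n v \<in> {x. restrict x W = y}})" by simp
  then have "real (card S) = (\<Sum>y\<in>Y. real (card {v \<in> Ln n. X n v \<in> {x. restrict x W = y}}))"
    by (simp add: of_nat_sum)
  then show ?thesis unfolding fr_def S_def by (simp add: sum_divide_distrib[symmetric])
qed


lemma fr_empty: "fr n {} = 0" by (simp add: fr_def)

lemma limit_measure:
  fixes s :: "nat \<Rightarrow> nat"
  shows "\<exists>t \<rho>. strict_mono t \<and> prob_space \<rho> \<and> sets \<rho> = sets (PiM UNIV (\<lambda>_::int. count_space (UNIV::'a set))) \<and>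
    (\<forall>W Y. finite W \<longrightarrow> Y \<subseteq> PiE W (\<lambda>_. UNIV) \<longrightarrow>
       (\<lambda>k. fr (s (t k)) {x. restrict x W \<in> Y}) \<longlonglongrightarrow> measure \<rho> {x. restrict x W \<in> Y})"
proof -
  define Jl where "Jl l = fst ` set l" for l :: "(int \<times> 'a) list"
  define yl where "yl l = restrict (\<lambda>i. the (map_of l i)) (Jl l)" for l :: "(int \<times> 'a) list"
  define a where "a l n = fr (s n) {x. restrict x (Jl l) = yl l}" for l n
  have "\<bar>a l n\<bar> \<le> 1" for l n using fr_nonneg fr_le1 by (simp add: a_def)
  then obtain t where t: "strict_mono t" "\<forall>l. convergent (\<lambda>k. a l (t k))"
    using diag_convergent[of a 1] by blast
  have conv: "convergent (\<lambda>k. fr (s (t k)) {x. restrict x J = y})" if J: "finite J" for J y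
  proof (cases "y \<in> PiE J (\<lambda>_. UNIV)")
    case True
    define l where "l = map (\<lambda>i. (i, y i)) (sorted_list_of_set J)"
    have "Jl l = J" using J by (simp add: Jl_def l_def image_image)
    moreover have "yl l = y"
    proof -
      have "map_of l = (Some \<circ> y) |` J" unfolding l_def using J by (simp add: map_of_map_restrict)
      then have "yl l = restrict y J" using \<open>Jl l = J\<close> by (auto simp: yl_def restrict_def fun_eq_iff)
      then show ?thesis using True by (simp add: extensional_restrict)
    qed
    moreover have "convergent (\<lambda>k. fr (s (t k)) {x. restrict x (Jl l) = yl l})" using t(2) by (simp add: a_def)
    ultimately show ?thesis by simp
  next
    case False
    then have "{x. restrict x J = y} = {}" by auto
    then show ?thesis by (simp add: fr_empty convergent_const)
  qed
  define q where "q J y = (if finite J then lim (\<lambda>k. fr (s (t k)) {x. restrict x J = y}) else 0)" for J y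
  have qlim: "(\<lambda>k. fr (s (t k)) {x. restrict x J = y}) \<longlonglongrightarrow> q J y" if "finite J" for J y
    using conv[OF that, of y] that by (simp add: q_def convergent_LIMSEQ_iff)
  have q_nonneg: "0 \<le> q J y" for J y
  proof (cases "finite J")
    case True
    show ?thesis by (rule LIMSEQ_le_const[OF qlim[OF True]]) (simp add: fr_nonneg)
  qed (simp add: q_def)
  have q_sum: "(\<Sum>y\<in>PiE J (\<lambda>_. UNIV). q J y) = 1" if J: "finite J" for J
  proof -
    have "(\<lambda>k. \<Sum>y\<in>PiE J (\<lambda>_. UNIV). fr (s (t k)) {x. restrict x J = y}) \<longlonglongrightarrow> (\<Sum>y\<in>PiE J (\<lambda>_. UNIV). q J y)"
      by (intro tendsto_sum qlim J)
    moreover have "(\<lambda>k. \<Sum>y\<in>PiE J (\<lambda>_. UNIV). fr (s (t k)) {x. restrict x J = y}) = (\<lambda>k. 1)"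
      using fr_total[OF J] by simp
    ultimately have "(\<lambda>k. 1::real) \<longlonglongrightarrow> (\<Sum>y\<in>PiE J (\<lambda>_. UNIV). q J y)" by simp
    from LIMSEQ_unique[OF tendsto_const this] show ?thesis by simp
  qed
  have q_cons: "q J y = (\<Sum>z\<in>{z\<in>PiE H (\<lambda>_. UNIV). restrict z J = y}. q H z)"
    if H: "finite H" and JH: "J \<subseteq> H" and y: "y \<in> PiE J (\<lambda>_. UNIV)" for J H y
  proof -
    have J: "finite J" using H JH by (rule finite_subset[rotated])
    have "(\<lambda>k. \<Sum>z\<in>{z\<in>PiE H (\<lambda>_. UNIV). restrict z J = y}. fr (s (t k)) {x. restrict x H = z})
        \<longlonglongrightarrow> (\<Sum>z\<in>{z\<in>PiE H (\<lambda>_. UNIV). restrict z J = y}. q H z)"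
      by (intro tendsto_sum qlim H)
    moreover have "(\<lambda>k. \<Sum>z\<in>{z\<in>PiE H (\<lambda>_. UNIV). restrict z J = y}. fr (s (t k)) {x. restrict x H = z}) =
        (\<lambda>k. fr (s (t k)) {x. restrict x J = y})"
      using fr_group[OF H JH] by simp
    ultimately have "(\<lambda>k. fr (s (t k)) {x. restrict x J = y}) \<longlonglongrightarrow> (\<Sum>z\<in>{z\<in>PiE H (\<lambda>_. UNIV). restrict z J = y}. q H z)"
      by simp
    from LIMSEQ_unique[OF qlim[OF J, of y] this] show ?thesis .
  qed
  from construct_measure[of q, OF q_nonneg q_sum q_cons]
  obtain \<rho> where \<rho>0: "prob_space \<rho> \<and> sets \<rho> = sets (PiM UNIV (\<lambda>_::int. count_space (UNIV::'a set))) \<and>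
    (\<forall>J Y. finite J \<longrightarrow> Y \<subseteq> PiE J (\<lambda>_. UNIV) \<longrightarrow>
        emeasure \<rho> (prod_emb UNIV (\<lambda>_. count_space UNIV) J Y) = (\<Sum>y\<in>Y. ennreal (q J y)))" ..
  then have \<rho>: "prob_space \<rho>" "sets \<rho> = sets (PiM UNIV (\<lambda>_::int. count_space (UNIV::'a set)))"
    "\<And>J Y. finite J \<Longrightarrow> Y \<subseteq> PiE J (\<lambda>_. UNIV) \<Longrightarrow>
        emeasure \<rho> (prod_emb UNIV (\<lambda>_. count_space UNIV) J Y) = (\<Sum>y\<in>Y. ennreal (q J y))"
    by auto
  have "(\<lambda>k. fr (s (t k)) {x. restrict x W \<in> Y}) \<longlonglongrightarrow> measure \<rho> {x. restrict x W \<in> Y}"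
    if W: "finite W" and Y: "Y \<subseteq> PiE W (\<lambda>_. UNIV)" for W Y
  proof -
    have "emeasure \<rho> {x. restrict x W \<in> Y} = (\<Sum>y\<in>Y. ennreal (q W y))"
      using \<rho>(3)[OF W Y] by (simp add: prod_emb_UNIV_eq)
    also have "\<dots> = ennreal (\<Sum>y\<in>Y. q W y)" using q_nonneg by (simp add: sum_ennreal)
    finally have m: "measure \<rho> {x. restrict x W \<in> Y} = (\<Sum>y\<in>Y. q W y)"
      using q_nonneg by (simp add: measure_def sum_nonneg)
    have "(\<lambda>k. \<Sum>y\<in>Y. fr (s (t k)) {x. restrict x W = y}) \<longlonglongrightarrow> (\<Sum>y\<in>Y. q W y)"
      by (intro tendsto_sum qlim W)
    then show ?thesis using fr_local[OF W Y] m by simp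
  qed
  then show ?thesis using t(1) \<rho>(1,2) by (intro exI[of _ t] exI[of _ \<rho>]) auto
qed

end

lemma lim_sub_zero:
  fixes f e :: "nat \<Rightarrow> real"
  assumes u: "strict_mono u" and e: "e \<longlonglongrightarrow> 0" and bound: "\<forall>n\<ge>N. \<bar>f n\<bar> \<le> e n"
  shows "(\<lambda>k. f (u k)) \<longlonglongrightarrow> 0"
proof -
  have "eventually (\<lambda>n. norm (f n) \<le> e n) sequentially"
    using bound unfolding eventually_sequentially by auto
  then have "f \<longlonglongrightarrow> 0" using e by (rule Lim_null_comparison)
  then have "(f \<circ> u) \<longlonglongrightarrow> 0" using u by (rule LIMSEQ_subseq_LIMSEQ)
  then show ?thesis by (simp add: comp_def)
qed

lemma finite_lower_bound: "finite (W::int set) \<Longrightarrow> \<exists>N::nat. \<forall>i\<in>W. - int N \<le> i"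
proof (induction W rule: finite_induct)
  case empty then show ?case by simp
next
  case (insert w W)
  then obtain N where N: "\<forall>i\<in>W. - int N \<le> i" by blast
  show ?case by (rule exI[of _ "max N (nat (- w))"]) (use N in auto)
qed

lemma shiftZ_meas: "shiftZ \<in> measurable (PiM UNIV (\<lambda>_::int. count_space (UNIV::'a set))) (PiM UNIV (\<lambda>_::int. count_space (UNIV::'a set)))"
proof -
  have "(\<lambda>\<omega> i. \<omega> (i + 1)) \<in> measurable (PiM UNIV (\<lambda>_::int. count_space (UNIV::'a set))) (PiM UNIV (\<lambda>_::int. count_space (UNIV::'a set)))"
    by (rule measurable_PiM_single') (auto simp: space_PiM)
  then show ?thesis unfolding shiftZ_def .
qed

locale lang2 = lang +
  assumes ratio: "(\<lambda>n. real (p (Suc n)) / real (p n)) \<longlonglongrightarrow> 1"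
    and unb: "\<not> bdd_above (range p)"
begin

lemma eD: "(\<lambda>n. real (D n + 1) / real (p n)) \<longlonglongrightarrow> 0"
  using ratio_to_zero[OF p_pos p_mono_Suc ratio unb] unfolding D_def .

lemma eDc: "(\<lambda>n. c * (real (D n + 1) / real (p n))) \<longlonglongrightarrow> 0"
  using tendsto_mult[OF tendsto_const eD, of c] by simp

lemma fr_shift:
  assumes A: "loc W A" and W: "\<forall>i\<in>W. - int n \<le> i"
  shows "\<bar>fr n (shiftZ -` A) - fr n A\<bar> \<le> real (D n + 1) / real (p n)"
proof -
  define S where "S = {u \<in> Ln n. X n u \<in> A}"
  have "{v \<in> Ln n. X n v \<in> shiftZ -` A} = {v \<in> Ln n. sg v \<in> S}"
  proof (rule Collect_cong, rule conj_cong[OF refl])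
    fix v assume v: "v \<in> Ln n"
    have "\<forall>i\<in>W. shiftZ (X n v) i = X n (sg v) i"
      using W X_shift[OF v] by (simp add: shiftZ_def)
    then have "shiftZ (X n v) \<in> A \<longleftrightarrow> X n (sg v) \<in> A" using A unfolding loc_def by blast
    then show "X n v \<in> shiftZ -` A \<longleftrightarrow> sg v \<in> S" using v sg_Ln by (simp add: S_def)
  qed
  moreover have h: "\<bar>int (card {v \<in> Ln n. sg v \<in> S}) - int (card S)\<bar> \<le> int (D n) + 1"
    by (rule preimage_bound) (auto simp: S_def)
  have "real_of_int \<bar>int (card {v \<in> Ln n. sg v \<in> S}) - int (card S)\<bar> \<le> real_of_int (int (D n) + 1)"
    using h by (simp only: of_int_le_iff)
  then have "\<bar>real (card {v \<in> Ln n. sg v \<in> S}) - real (card S)\<bar> \<le> real (D n + 1)" by simp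
  ultimately have "\<bar>real (card {v \<in> Ln n. X n v \<in> shiftZ -` A}) - real (card {v \<in> Ln n. X n v \<in> A})\<bar> \<le> real (D n + 1)"
    unfolding S_def by simp
  moreover have "fr n (shiftZ -` A) - fr n A =
      (real (card {v \<in> Ln n. X n v \<in> shiftZ -` A}) - real (card {v \<in> Ln n. X n v \<in> A})) / real (p n)"
    by (simp add: fr_def diff_divide_distrib)
  moreover have "real (p n) > 0" using p_pos[of n] by simp
  ultimately show ?thesis by (simp add: abs_divide divide_right_mono)
qed

lemma natext_fr:
  assumes j: "- int n \<le> j"
  shows "\<bar>fr n {x. win x j k \<notin> L}\<bar> \<le> real (nat (j + int k) * (nat (j + int k) + 1)) * (real (D n + 1) / real (p n))"
proof -
  define K where "K = nat (j + int k)"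
  have "card {v \<in> Ln n. X n v \<in> {x. win x j k \<notin> L}} \<le> K * (D n + K * (D n + 1))"
    using natext_bad_bound[OF j, of k] by (simp add: K_def)
  also have "\<dots> \<le> K * (K + 1) * (D n + 1)" by (simp add: algebra_simps)
  finally have "real (card {v \<in> Ln n. X n v \<in> {x. win x j k \<notin> L}}) \<le> real (K * (K + 1)) * real (D n + 1)"
    by (simp only: of_nat_mult[symmetric] of_nat_le_iff)
  moreover have "real (p n) > 0" using p_pos[of n] by simp
  ultimately have "fr n {x. win x j k \<notin> L} \<le> real (K * (K + 1)) * real (D n + 1) / real (p n)"
    unfolding fr_def by (simp add: divide_right_mono)
  then show ?thesis using fr_nonneg[of n "{x. win x j k \<notin> L}"] unfolding K_def by simp
qed


lemma rho_good:
  assumes u: "strict_mono u" and \<rho>: "prob_space \<rho>" "sets \<rho> = sets (PiM UNIV (\<lambda>_::int. count_space (UNIV::'a set)))"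
    and conv: "\<forall>W Y. finite W \<longrightarrow> Y \<subseteq> PiE W (\<lambda>_. UNIV) \<longrightarrow>
       (\<lambda>k. fr (u k) {x. restrict x W \<in> Y}) \<longlonglongrightarrow> measure \<rho> {x. restrict x W \<in> Y}"
  shows "\<rho> \<in> inv_probs shiftZ (natext L)"
proof -
  interpret rho: prob_space \<rho> by (rule \<rho>(1))
  have cl: "(\<lambda>k. fr (u k) A) \<longlonglongrightarrow> measure \<rho> A" if "loc W A" "finite W" for W A
    using conv that(2) restrict_img_PiE[of W A] loc_eq[OF that(1)] by metis
  have sp: "space \<rho> = UNIV" using sets_eq_imp_space_eq[OF \<rho>(2)] by (simp add: space_PiM)
  have lsets: "A \<in> sets \<rho>" if "loc W A" "finite W" for W A
    using loc_sets[OF that] \<rho>(2) by simp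
  have meq: "measure \<rho> A = measure \<rho> B" if A: "loc WA A" "finite WA" and B: "loc WB B" "finite WB"
    and close: "\<forall>n\<ge>N. \<bar>fr n A - fr n B\<bar> \<le> c * (real (D n + 1) / real (p n))" for WA A WB B N c
  proof -
    have "(\<lambda>k. fr (u k) A - fr (u k) B) \<longlonglongrightarrow> 0"
      by (rule lim_sub_zero[OF u eDc]) (use close in auto)
    moreover have "(\<lambda>k. fr (u k) A - fr (u k) B) \<longlonglongrightarrow> measure \<rho> A - measure \<rho> B"
      by (intro tendsto_diff cl[OF A] cl[OF B])
    ultimately have "measure \<rho> A - measure \<rho> B = 0" using LIMSEQ_unique by blast
    then show ?thesis by simp
  qed
  have meas_shift: "shiftZ \<in> measurable \<rho> (PiM UNIV (\<lambda>_::int. count_space (UNIV::'a set)))"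
    using shiftZ_meas by (simp add: measurable_cong_sets[OF \<rho>(2) refl])
  have inv: "distr \<rho> seq_space shiftZ = \<rho>"
  proof (rule measure_eqI_PiM_infinite[symmetric])
    show "sets \<rho> = sets (PiM UNIV (\<lambda>_::int. count_space (UNIV::'a set)))" by (rule \<rho>(2))
    show "sets (distr \<rho> seq_space shiftZ) = sets (PiM UNIV (\<lambda>_::int. count_space (UNIV::'a set)))"
      by (simp add: seq_space_def)
    show "finite_measure \<rho>" by (rule rho.finite_measure_axioms)
  next
    fix J :: "int set" and A :: "int \<Rightarrow> 'a set"
    assume J: "finite J" "J \<subseteq> UNIV"
    define B where "B = prod_emb UNIV (\<lambda>_::int. count_space (UNIV::'a set)) J (PiE J A)"
    have Bx: "x \<in> B \<longleftrightarrow> (\<forall>j\<in>J. x j \<in> A j)" for x by (auto simp: B_def prod_emb_def PiE_iff)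
    have locB: "loc J B" unfolding loc_def using Bx by auto
    have locS: "loc ((\<lambda>j. j + 1) ` J) (shiftZ -` B)" unfolding loc_def using Bx by (auto simp: shiftZ_def)
    have fS: "finite ((\<lambda>j. j + 1) ` J)" using J by simp
    obtain N where N: "\<forall>i\<in>J. - int N \<le> i" using finite_lower_bound[OF J(1)] by blast
    have close: "\<forall>n\<ge>N. \<bar>fr n (shiftZ -` B) - fr n B\<bar> \<le> 1 * (real (D n + 1) / real (p n))"
    proof (intro allI impI)
      fix n assume "N \<le> n"
      then have "\<forall>i\<in>J. - int n \<le> i" using N by force
      then show "\<bar>fr n (shiftZ -` B) - fr n B\<bar> \<le> 1 * (real (D n + 1) / real (p n))"
        using fr_shift[OF locB] by simp
    qed
    have "measure \<rho> (shiftZ -` B) = measure \<rho> B" by (rule meq[OF locS fS locB J(1) close])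
    moreover have "emeasure (distr \<rho> seq_space shiftZ) B = emeasure \<rho> (shiftZ -` B)"
    proof -
      have "B \<in> sets seq_space" using lsets[OF locB J(1)] \<rho>(2) by (simp add: seq_space_def)
      then have "emeasure (distr \<rho> seq_space shiftZ) B = emeasure \<rho> (shiftZ -` B \<inter> space \<rho>)"
        using meas_shift by (intro emeasure_distr) (simp_all add: seq_space_def)
      then show ?thesis using sp by simp
    qed
    ultimately show "emeasure \<rho> (prod_emb UNIV (\<lambda>_::int. count_space (UNIV::'a set)) J (PiE J A)) =
        emeasure (distr \<rho> seq_space shiftZ) (prod_emb UNIV (\<lambda>_::int. count_space (UNIV::'a set)) J (PiE J A))"
      using lsets[OF locB J(1)] lsets[OF locS fS] unfolding B_def[symmetric]
      by (simp add: rho.emeasure_eq_measure)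
  qed
  have nat1: "emeasure \<rho> (natext L) = 1"
  proof -
    define Bj where "Bj jk = {x. win x (fst jk) (snd jk) \<notin> L}" for jk :: "int \<times> nat"
    have locBj: "loc {fst jk..<fst jk + int (snd jk)} (Bj jk)" for jk
    proof -
      have "map (\<lambda>i. x (fst jk + int i)) [0..<snd jk] = map (\<lambda>i. x' (fst jk + int i)) [0..<snd jk]"
        if "\<forall>i\<in>{fst jk..<fst jk + int (snd jk)}. x i = x' i" for x x' :: "int \<Rightarrow> 'a"
        by (rule map_cong) (use that in auto)
      note eq = this
      show ?thesis unfolding loc_def
      proof (intro allI impI)
        fix x x' :: "int \<Rightarrow> 'a" assume h: "\<forall>i\<in>{fst jk..<fst jk + int (snd jk)}. x i = x' i"
        show "x \<in> Bj jk \<longleftrightarrow> x' \<in> Bj jk" unfolding Bj_def win_def mem_Collect_eq eq[OF h] ..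
      qed
    qed
    have null: "Bj jk \<in> null_sets \<rho>" for jk
    proof -
      obtain j k where jk: "jk = (j, k)" by (cases jk)
      have "measure \<rho> (Bj jk) = measure \<rho> {}"
      proof (rule meq[OF locBj _ _ _ ])
        show "loc {} ({}::(int \<Rightarrow> 'a) set)" by (simp add: loc_def)
        show "finite {fst jk..<fst jk + int (snd jk)}" by simp
        show "finite ({}::int set)" by simp
        show "\<forall>n\<ge>nat (- j). \<bar>fr n (Bj jk) - fr n {}\<bar> \<le> real (nat (j + int k) * (nat (j + int k) + 1)) * (real (D n + 1) / real (p n))"
          using natext_fr unfolding Bj_def jk by (auto simp: fr_empty)
      qed
      then have "emeasure \<rho> (Bj jk) = 0" using lsets[OF locBj] by (simp add: rho.emeasure_eq_measure)
      then show ?thesis using lsets[OF locBj] by (simp add: null_sets_def)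
    qed
    have N: "(\<Union>jk\<in>UNIV. Bj jk) \<in> null_sets \<rho>" by (rule null_sets_UN') (simp_all add: null)
    have ne: "natext L = space \<rho> - (\<Union>jk\<in>UNIV. Bj jk)"
      using sp by (auto simp: natext_def Bj_def win_def)
    have "emeasure \<rho> (space \<rho> - (\<Union>jk\<in>UNIV. Bj jk)) = emeasure \<rho> (space \<rho>) - emeasure \<rho> (\<Union>jk\<in>UNIV. Bj jk)"
      using N by (intro emeasure_compl) (auto dest: null_setsD1 null_setsD2)
    then have "emeasure \<rho> (natext L) = emeasure \<rho> (space \<rho>) - emeasure \<rho> (\<Union>jk\<in>UNIV. Bj jk)"
      using ne by simp
    then show ?thesis using N by (simp add: rho.emeasure_space_1 null_setsD1)
  qed
  show ?thesis unfolding inv_probs_def using \<rho> inv nat1 by (simp add: seq_space_def)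
qed


lemma line_ball_explicit:
  "ball (line_graph x) 0 r = ({- int r..int r}, {(i, x i, i + 1) | i. - int r \<le> i \<and> i < int r}, 0)"
proof -
  have V: "fst (ball (line_graph x) 0 r) = {- int r..int r}" by (rule line_ball_V)
  have E: "fst (snd (ball (line_graph x) 0 r)) = {(i, x i, i + 1) | i. - int r \<le> i \<and> i < int r}"
    unfolding ball_E_gen[of "line_graph x"] V by (auto simp: line_graph_def)
  have "snd (snd (ball (line_graph x) 0 r)) = 0" by (rule ball_root_gen)
  then show ?thesis using V E by (metis prod.collapse)
qed

lemma loc_T: "loc {- int r..<int r} {x::int \<Rightarrow> 'a. rooted_iso (ball (line_graph x) 0 r) H}"
proof -
  have "ball (line_graph x) 0 r = ball (line_graph x') 0 r" if "\<forall>i\<in>{- int r..<int r}. x i = x' i" for x x' :: "int \<Rightarrow> 'a"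
  proof -
    have "{(i, x i, i + 1) | i. - int r \<le> i \<and> i < int r} = {(i, x' i, i + 1) | i. - int r \<le> i \<and> i < int r}"
      using that by force
    then show ?thesis by (simp add: line_ball_explicit)
  qed
  note eq = this
  show ?thesis unfolding loc_def
  proof (intro allI impI)
    fix x x' :: "int \<Rightarrow> 'a" assume h: "\<forall>i\<in>{- int r..<int r}. x i = x' i"
    show "x \<in> {x::int \<Rightarrow> 'a. rooted_iso (ball (line_graph x) 0 r) H} \<longleftrightarrow> x' \<in> {x::int \<Rightarrow> 'a. rooted_iso (ball (line_graph x) 0 r) H}"
      unfolding mem_Collect_eq eq[OF h] ..
  qed
qed

theorem main_lang:
  assumes uniq: "\<And>\<mu>1 \<mu>2. \<mu>1 \<in> inv_probs shiftZ (natext L) \<Longrightarrow> \<mu>2 \<in> inv_probs shiftZ (natext L) \<Longrightarrow> \<mu>1 = \<mu>2"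
  shows "\<exists>\<mu>. inv_probs shiftZ (natext L) = {\<mu>} \<and> BS_limit_line (rauzy L) \<mu>"
proof -
  have good: "\<exists>t. strict_mono t \<and> (\<forall>W A. loc W A \<longrightarrow> finite W \<longrightarrow> (\<lambda>k. fr (s (t k)) A) \<longlonglongrightarrow> measure \<rho>' A) \<and> \<rho>' \<in> inv_probs shiftZ (natext L)"
    if s: "strict_mono s" and inv': "\<And>\<rho>. \<rho> \<in> inv_probs shiftZ (natext L) \<Longrightarrow> \<rho> = \<rho>'" for s :: "nat \<Rightarrow> nat" and \<rho>'
  proof -
    obtain t \<rho> where t: "strict_mono t" "prob_space \<rho>" "sets \<rho> = sets (PiM UNIV (\<lambda>_::int. count_space (UNIV::'a set)))"
      "\<forall>W Y. finite W \<longrightarrow> Y \<subseteq> PiE W (\<lambda>_. UNIV) \<longrightarrow>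
       (\<lambda>k. fr (s (t k)) {x. restrict x W \<in> Y}) \<longlonglongrightarrow> measure \<rho> {x. restrict x W \<in> Y}"
      using limit_measure[of s] by blast
    have u: "strict_mono (\<lambda>k. s (t k))" using s t(1) by (simp add: strict_mono_def)
    have "\<rho> \<in> inv_probs shiftZ (natext L)" by (rule rho_good[OF u t(2,3,4)])
    then have "\<rho> = \<rho>'" by (rule inv')
    moreover have "(\<lambda>k. fr (s (t k)) A) \<longlonglongrightarrow> measure \<rho> A" if "loc W A" "finite W" for W A
      using t(4) that(2) restrict_img_PiE[of W A] loc_eq[OF that(1)] by metis
    ultimately show ?thesis using t(1) \<open>\<rho> \<in> inv_probs shiftZ (natext L)\<close> by blast
  qed
  obtain t0 \<rho> where t0: "strict_mono t0" "prob_space \<rho>" "sets \<rho> = sets (PiM UNIV (\<lambda>_::int. count_space (UNIV::'a set)))"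
      "\<forall>W Y. finite W \<longrightarrow> Y \<subseteq> PiE W (\<lambda>_. UNIV) \<longrightarrow>
       (\<lambda>k. fr (t0 k) {x. restrict x W \<in> Y}) \<longlonglongrightarrow> measure \<rho> {x. restrict x W \<in> Y}"
    using limit_measure[of "\<lambda>n. n"] by blast
  have rho_in: "\<rho> \<in> inv_probs shiftZ (natext L)" by (rule rho_good[OF t0(1,2,3,4)])
  then have inv_eq: "inv_probs shiftZ (natext L) = {\<rho>}" using uniq by blast
  have sp: "space \<rho> = UNIV" using sets_eq_imp_space_eq[OF t0(3)] by (simp add: space_PiM)
  have "BS_limit_line (rauzy L) \<rho>"
    unfolding BS_limit_line_def
  proof (intro allI impI)
    fix r and H :: "(nat, 'a) rooted_ldigraph"
    define T where "T = {x. rooted_iso (ball (line_graph x) 0 r) H}"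
    have locT: "loc {- int r..<int r} T" unfolding T_def by (rule loc_T)
    have c1: "(\<lambda>n. fr n T) \<longlonglongrightarrow> measure \<rho> T"
    proof (rule subseq_principle)
      fix s :: "nat \<Rightarrow> nat" assume s: "strict_mono s"
      obtain t where "strict_mono t" "\<forall>W A. loc W A \<longrightarrow> finite W \<longrightarrow> (\<lambda>k. fr (s (t k)) A) \<longlonglongrightarrow> measure \<rho> A"
        using good[OF s, of \<rho>] inv_eq by blast
      then show "\<exists>t. strict_mono t \<and> (\<lambda>k. fr (s (t k)) T) \<longlonglongrightarrow> measure \<rho> T" using locT by auto
    qed
    have c2: "(\<lambda>n. bs_freq (rauzy L n) r H - fr n T) \<longlonglongrightarrow> 0"
    proof -
      have "(\<lambda>k. bs_freq (rauzy L k) r H - fr k T) \<longlonglongrightarrow> 0"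
      proof (rule lim_sub_zero[where u = "\<lambda>k. k", OF _ eDc[of "real (r + 1 + Cg r)"]])
        show "strict_mono (\<lambda>k::nat. k)" by (simp add: strict_mono_def)
        show "\<forall>n\<ge>2*r+2. \<bar>bs_freq (rauzy L n) r H - fr n T\<bar> \<le> real (r + 1 + Cg r) * (real (D n + 1) / real (p n))"
        proof (intro allI impI)
          fix n assume n: "2*r+2 \<le> n"
          have "\<bar>real (card {v \<in> Ln n. rooted_iso (ball (rauzy L n) v r) H}) -
                 real (card {v \<in> Ln n. rooted_iso (ball (line_graph (X n v)) 0 r) H})\<bar>
              \<le> real (card {v \<in> Ln n. \<not> (rooted_iso (ball (rauzy L n) v r) H \<longleftrightarrow> rooted_iso (ball (line_graph (X n v)) 0 r) H)})"
            by (rule card_diff_pred) simp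
          also have "\<dots> \<le> real ((r + 1 + Cg r) * (D n + 1))"
            using bad_bound[OF n, of H] by (simp only: of_nat_le_iff)
          finally have h: "\<bar>real (card {v \<in> Ln n. rooted_iso (ball (rauzy L n) v r) H}) -
                 real (card {v \<in> Ln n. rooted_iso (ball (line_graph (X n v)) 0 r) H})\<bar> \<le> real ((r + 1 + Cg r) * (D n + 1))" .
          have "bs_freq (rauzy L n) r H - fr n T =
              (real (card {v \<in> Ln n. rooted_iso (ball (rauzy L n) v r) H}) -
                 real (card {v \<in> Ln n. rooted_iso (ball (line_graph (X n v)) 0 r) H})) / real (p n)"
            by (simp add: bs_freq_def fr_def T_def rauzy_V p_def diff_divide_distrib)
          moreover have "real (p n) > 0" using p_pos[of n] by simp
          ultimately have A: "\<bar>bs_freq (rauzy L n) r H - fr n T\<bar> \<le> real ((r + 1 + Cg r) * (D n + 1)) / real (p n)"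
            using h by (simp add: abs_divide divide_right_mono del: of_nat_mult)
          moreover have "real ((r + 1 + Cg r) * (D n + 1)) / real (p n) = real (r + 1 + Cg r) * (real (D n + 1) / real (p n))"
            by (simp only: of_nat_mult times_divide_eq_right)
          ultimately show "\<bar>bs_freq (rauzy L n) r H - fr n T\<bar> \<le> real (r + 1 + Cg r) * (real (D n + 1) / real (p n))"
            by linarith
        qed
      qed
      then show ?thesis by simp
    qed
    have "(\<lambda>n. (bs_freq (rauzy L n) r H - fr n T) + fr n T) \<longlonglongrightarrow> 0 + measure \<rho> T"
      by (intro tendsto_add c1 c2)
    moreover have "{x \<in> space \<rho>. rooted_iso (ball (line_graph x) 0 r) H} = T" using sp by (simp add: T_def)
    ultimately show "(\<lambda>n. bs_freq (rauzy L n) r H) \<longlonglongrightarrow> measure \<rho> {x \<in> space \<rho>. rooted_iso (ball (line_graph x) 0 r) H}"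
      by simp
  qed
  then show ?thesis using inv_eq by blast
qed

end

lemma closure_seq:
  "x \<in> seq_top closure_of S \<longleftrightarrow> (\<forall>K. finite K \<longrightarrow> (\<exists>y\<in>S. \<forall>i\<in>K. y i = x i))"
proof
  assume x: "x \<in> seq_top closure_of S"
  show "\<forall>K. finite K \<longrightarrow> (\<exists>y\<in>S. \<forall>i\<in>K. y i = x i)"
  proof (intro allI impI)
    fix K :: "'a set" assume K: "finite K"
    define T where "T = PiE UNIV (\<lambda>i. if i \<in> K then {x i} else UNIV)"
    have "openin seq_top T"
      unfolding seq_top_def T_def openin_PiE_gen
      by (rule disjI2) (auto intro: finite_subset[OF _ K])
    moreover have "x \<in> T" by (auto simp: T_def PiE_iff)
    ultimately obtain y where "y \<in> S" "y \<in> T" using x unfolding in_closure_of by blast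
    then show "\<exists>y\<in>S. \<forall>i\<in>K. y i = x i" by (intro bexI[of _ y]) (auto simp: T_def PiE_iff split: if_splits)
  qed
next
  assume h: "\<forall>K. finite K \<longrightarrow> (\<exists>y\<in>S. \<forall>i\<in>K. y i = x i)"
  show "x \<in> seq_top closure_of S"
    unfolding in_closure_of
  proof (intro conjI allI impI)
    show "x \<in> topspace seq_top" by (simp add: seq_top_def)
  next
    fix T assume T: "x \<in> T \<and> openin seq_top T"
    then obtain U where U: "finite {i. U i \<noteq> UNIV}" "x \<in> PiE UNIV U" "PiE UNIV U \<subseteq> T"
      unfolding seq_top_def openin_product_topology_alt by force
    obtain y where y: "y \<in> S" "\<forall>i\<in>{i. U i \<noteq> UNIV}. y i = x i" using h U(1) by blast
    have "y \<in> PiE UNIV U" using y(2) U(2) by (auto simp: PiE_iff) (metis UNIV_I)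
    then show "\<exists>y. y \<in> S \<and> y \<in> T" using y(1) U(3) by blast
  qed
qed

lemma langN_iff: "w \<in> lang_N \<omega> \<longleftrightarrow> (\<exists>j. \<forall>i<length w. w ! i = \<omega> (j + i))"
proof
  assume "w \<in> lang_N \<omega>"
  then obtain j k where "w = map (\<lambda>i. \<omega> (j + i)) [0..<k]" by (auto simp: lang_N_def)
  then show "\<exists>j. \<forall>i<length w. w ! i = \<omega> (j + i)" by auto
next
  assume "\<exists>j. \<forall>i<length w. w ! i = \<omega> (j + i)"
  then obtain j where j: "\<forall>i<length w. w ! i = \<omega> (j + i)" by blast
  have "w = map (\<lambda>i. \<omega> (j + i)) [0..<length w]" using j by (intro nth_equalityI) auto
  then show "w \<in> lang_N \<omega>" by (auto simp: lang_N_def)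
qed

lemma langZ_iff: "w \<in> lang_Z \<omega> \<longleftrightarrow> (\<exists>j. \<forall>i<length w. w ! i = \<omega> (j + int i))"
proof
  assume "w \<in> lang_Z \<omega>"
  then obtain j k where "w = map (\<lambda>i. \<omega> (j + int i)) [0..<k]" by (auto simp: lang_Z_def)
  then show "\<exists>j. \<forall>i<length w. w ! i = \<omega> (j + int i)" by auto
next
  assume "\<exists>j. \<forall>i<length w. w ! i = \<omega> (j + int i)"
  then obtain j where j: "\<forall>i<length w. w ! i = \<omega> (j + int i)" by blast
  have "w = map (\<lambda>i. \<omega> (j + int i)) [0..<length w]" using j by (intro nth_equalityI) auto
  then show "w \<in> lang_Z \<omega>" by (auto simp: lang_Z_def)
qed

lemma lang_langN: "lang (lang_N (\<omega> :: nat \<Rightarrow> 'a::finite))"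
proof
  fix u v :: "'a list"
  assume "u @ v \<in> lang_N \<omega>"
  then obtain j where j: "\<forall>i<length (u @ v). (u @ v) ! i = \<omega> (j + i)" by (auto simp: langN_iff)
  show "u \<in> lang_N \<omega>" unfolding langN_iff
  proof (intro exI allI impI)
    fix i assume "i < length u" then show "u ! i = \<omega> (j + i)" using j[rule_format, of i] by (simp add: nth_append)
  qed
next
  fix u v :: "'a list"
  assume "u @ v \<in> lang_N \<omega>"
  then obtain j where j: "\<forall>i<length (u @ v). (u @ v) ! i = \<omega> (j + i)" by (auto simp: langN_iff)
  show "v \<in> lang_N \<omega>" unfolding langN_iff
  proof (intro exI[of _ "j + length u"] allI impI)
    fix i assume "i < length v" then show "v ! i = \<omega> (j + length u + i)"
      using j[rule_format, of "length u + i"] by (simp add: nth_append add.assoc)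
  qed
next
  fix w assume "w \<in> lang_N \<omega>"
  then obtain j where j: "\<forall>i<length w. w ! i = \<omega> (j + i)" by (auto simp: langN_iff)
  have "w @ [\<omega> (j + length w)] \<in> lang_N \<omega>" unfolding langN_iff
    by (intro exI[of _ j] allI impI) (use j in \<open>auto simp: nth_append less_Suc_eq\<close>)
  then show "\<exists>b. w @ [b] \<in> lang_N \<omega>" by blast
next
  fix n
  have "{w \<in> lang_N \<omega>. length w = n \<and> (\<forall>a. a # w \<notin> lang_N \<omega>)} \<subseteq> {map \<omega> [0..<n]}"
  proof
    fix w assume w: "w \<in> {w \<in> lang_N \<omega>. length w = n \<and> (\<forall>a. a # w \<notin> lang_N \<omega>)}"
    then obtain j where j: "\<forall>i<length w. w ! i = \<omega> (j + i)" by (auto simp: langN_iff)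
    have "j = 0"
    proof (rule ccontr)
      assume "j \<noteq> 0"
      then obtain j' where j': "j = Suc j'" by (cases j) auto
      have "\<omega> j' # w \<in> lang_N \<omega>" unfolding langN_iff
      proof (intro exI[of _ j'] allI impI)
        fix i assume "i < length (\<omega> j' # w)"
        then show "(\<omega> j' # w) ! i = \<omega> (j' + i)" using j j' by (cases i) auto
      qed
      then show False using w by blast
    qed
    then have "w = map \<omega> [0..<n]" using j w by (intro nth_equalityI) auto
    then show "w \<in> {map \<omega> [0..<n]}" by simp
  qed
  then show "card {w \<in> lang_N \<omega>. length w = n \<and> (\<forall>a. a # w \<notin> lang_N \<omega>)} \<le> 1"
    using card_mono[of "{map \<omega> [0..<n]}"] by fastforce
next
  show "[] \<in> lang_N \<omega>" by (simp add: langN_iff)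
qed

lemma lang_langZ: "lang (lang_Z (\<omega> :: int \<Rightarrow> 'a::finite))"
proof
  fix u v :: "'a list"
  assume "u @ v \<in> lang_Z \<omega>"
  then obtain j where j: "\<forall>i<length (u @ v). (u @ v) ! i = \<omega> (j + int i)" by (auto simp: langZ_iff)
  show "u \<in> lang_Z \<omega>" unfolding langZ_iff
  proof (intro exI allI impI)
    fix i assume "i < length u" then show "u ! i = \<omega> (j + int i)" using j[rule_format, of i] by (simp add: nth_append)
  qed
next
  fix u v :: "'a list"
  assume "u @ v \<in> lang_Z \<omega>"
  then obtain j where j: "\<forall>i<length (u @ v). (u @ v) ! i = \<omega> (j + int i)" by (auto simp: langZ_iff)
  show "v \<in> lang_Z \<omega>" unfolding langZ_iff
  proof (intro exI[of _ "j + int (length u)"] allI impI)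
    fix i assume "i < length v" then show "v ! i = \<omega> (j + int (length u) + int i)"
      using j[rule_format, of "length u + i"] by (simp add: nth_append add.assoc)
  qed
next
  fix w assume "w \<in> lang_Z \<omega>"
  then obtain j where j: "\<forall>i<length w. w ! i = \<omega> (j + int i)" by (auto simp: langZ_iff)
  have "w @ [\<omega> (j + int (length w))] \<in> lang_Z \<omega>" unfolding langZ_iff
    by (intro exI[of _ j] allI impI) (use j in \<open>auto simp: nth_append less_Suc_eq\<close>)
  then show "\<exists>b. w @ [b] \<in> lang_Z \<omega>" by blast
next
  fix n
  have E: "{w \<in> lang_Z \<omega>. length w = n \<and> (\<forall>a. a # w \<notin> lang_Z \<omega>)} = {}"
  proof (rule ccontr)
    assume "{w \<in> lang_Z \<omega>. length w = n \<and> (\<forall>a. a # w \<notin> lang_Z \<omega>)} \<noteq> {}"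
    then obtain w where w: "w \<in> lang_Z \<omega>" "\<forall>a. a # w \<notin> lang_Z \<omega>" by auto
    then obtain j where j: "\<forall>i<length w. w ! i = \<omega> (j + int i)" by (auto simp: langZ_iff)
    have "\<omega> (j - 1) # w \<in> lang_Z \<omega>" unfolding langZ_iff
    proof (intro exI[of _ "j - 1"] allI impI)
      fix i assume "i < length (\<omega> (j - 1) # w)"
      then show "(\<omega> (j - 1) # w) ! i = \<omega> (j - 1 + int i)" using j by (cases i) auto
    qed
    then show False using w by blast
  qed
  show "card {w \<in> lang_Z \<omega>. length w = n \<and> (\<forall>a. a # w \<notin> lang_Z \<omega>)} \<le> 1" unfolding E by simp
next
  show "[] \<in> lang_Z \<omega>" by (simp add: langZ_iff)
qed

lemma p_complexity: "lang L \<Longrightarrow> lang.p L = complexity L"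
  by (rule ext) (simp add: lang.p_def lang.Ln_def complexity_def)


lemma shiftZ_pow: "(shiftZ ^^ m) x = (\<lambda>i. x (i + int m))"
  by (induction m) (auto simp: shiftZ_def algebra_simps)

lemma shiftN_pow: "(shiftN ^^ m) x = (\<lambda>i. x (i + m))"
  by (induction m) (auto simp: shiftN_def algebra_simps)

lemma natext_SigmaZ: "natext (lang_Z \<omega>) = SigmaZ (\<omega> :: int \<Rightarrow> 'a)"
proof
  show "natext (lang_Z \<omega>) \<subseteq> SigmaZ \<omega>"
  proof
    fix \<tau> assume \<tau>: "\<tau> \<in> natext (lang_Z \<omega>)"
    show "\<tau> \<in> SigmaZ \<omega>" unfolding SigmaZ_def closure_seq
    proof (intro allI impI)
      fix K :: "int set" assume K: "finite K"
      obtain N where N: "\<forall>i\<in>K \<union> uminus ` K. - int N \<le> i" using finite_lower_bound[of "K \<union> uminus ` K"] K by blast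
      have "map (\<lambda>i. \<tau> (- int N + int i)) [0..<2*N+1] \<in> lang_Z \<omega>" using \<tau> unfolding natext_def by blast
      then obtain j0 where j0': "\<forall>i<length (map (\<lambda>i. \<tau> (- int N + int i)) [0..<2*N+1]).
          map (\<lambda>i. \<tau> (- int N + int i)) [0..<2*N+1] ! i = \<omega> (j0 + int i)" unfolding langZ_iff by blast
      have j0: "\<forall>i<2*N+1. \<tau> (- int N + int i) = \<omega> (j0 + int i)"
      proof (intro allI impI)
        fix i assume "i < 2*N+1"
        then show "\<tau> (- int N + int i) = \<omega> (j0 + int i)" using j0'[rule_format, of i] by (simp del: upt_Suc)
      qed
      have "\<forall>i\<in>K. \<omega> (i + (j0 + int N)) = \<tau> i"
      proof
        fix i assume i: "i \<in> K"
        have "- i \<in> K \<union> uminus ` K" using i by auto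
        then have "- int N \<le> - i" using N by blast
        moreover have "- int N \<le> i" using N i by blast
        ultimately have b: "- int N \<le> i" "i \<le> int N" by simp_all
        then have "nat (i + int N) < 2*N+1" by linarith
        then have "\<tau> (- int N + int (nat (i + int N))) = \<omega> (j0 + int (nat (i + int N)))" using j0 by blast
        then show "\<omega> (i + (j0 + int N)) = \<tau> i" using b by (simp add: algebra_simps)
      qed
      then show "\<exists>y\<in>{\<lambda>i. \<omega> (i + k) |k. True}. \<forall>i\<in>K. y i = \<tau> i"
        by (intro bexI[of _ "\<lambda>i. \<omega> (i + (j0 + int N))"]) auto
    qed
  qed
  show "SigmaZ \<omega> \<subseteq> natext (lang_Z \<omega>)"
  proof
    fix \<tau> assume "\<tau> \<in> SigmaZ \<omega>"
    then have cl: "\<forall>K. finite K \<longrightarrow> (\<exists>k. \<forall>i\<in>K. \<omega> (i + k) = \<tau> i)" unfolding SigmaZ_def closure_seq by blast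
    show "\<tau> \<in> natext (lang_Z \<omega>)" unfolding natext_def
    proof (intro CollectI allI)
      fix j :: int and k :: nat
      obtain k0 where k0: "\<forall>i\<in>{j..<j + int k}. \<omega> (i + k0) = \<tau> i" using cl by blast
      show "map (\<lambda>i. \<tau> (j + int i)) [0..<k] \<in> lang_Z \<omega>" unfolding langZ_iff
      proof (intro exI[of _ "j + k0"] allI impI)
        fix i assume "i < length (map (\<lambda>i. \<tau> (j + int i)) [0..<k])"
        then have i: "i < k" by simp
        then have "j + int i \<in> {j..<j + int k}" by simp
        then have "\<omega> (j + int i + k0) = \<tau> (j + int i)" using k0 by blast
        then show "map (\<lambda>i. \<tau> (j + int i)) [0..<k] ! i = \<omega> (j + k0 + int i)" using i by (simp add: algebra_simps)
      qed
    qed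
  qed
qed

lemma natext_SigmaN:
  assumes x: "x \<in> natext (lang_N (\<omega> :: nat \<Rightarrow> 'a))"
  shows "(\<lambda>n. x (int n)) \<in> SigmaN \<omega>"
  unfolding SigmaN_def closure_seq
proof (intro allI impI)
  fix K :: "nat set" assume K: "finite K"
  obtain M where M: "K \<subseteq> {..<M}" using finite_nat_bounded[OF K] by blast
  have "map (\<lambda>i. x (0 + int i)) [0..<M] \<in> lang_N \<omega>" using x by (simp only: natext_def mem_Collect_eq)
  then obtain j where j: "\<forall>i<M. x (int i) = \<omega> (j + i)" by (auto simp: langN_iff)
  have "\<forall>i\<in>K. (shiftN ^^ j) \<omega> i = x (int i)" using M j by (auto simp: shiftN_pow add.commute)
  then show "\<exists>y\<in>range (\<lambda>k. (shiftN ^^ k) \<omega>). \<forall>i\<in>K. y i = x (int i)" by blast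
qed

lemma meas_pi: "(\<lambda>x n. x (int n)) \<in> measurable (PiM UNIV (\<lambda>_::int. count_space (UNIV::'a set))) (PiM UNIV (\<lambda>_::nat. count_space (UNIV::'a set)))"
  by (rule measurable_PiM_single') (auto simp: space_PiM)

lemma shiftN_meas: "shiftN \<in> measurable (PiM UNIV (\<lambda>_::nat. count_space (UNIV::'a set))) (PiM UNIV (\<lambda>_::nat. count_space (UNIV::'a set)))"
proof -
  have "(\<lambda>\<omega> i. \<omega> (Suc i)) \<in> measurable (PiM UNIV (\<lambda>_::nat. count_space (UNIV::'a set))) (PiM UNIV (\<lambda>_::nat. count_space (UNIV::'a set)))"
    by (rule measurable_PiM_single') (auto simp: space_PiM)
  then show ?thesis unfolding shiftN_def .
qed

lemma proj_inv:
  assumes \<mu>: "\<mu> \<in> inv_probs shiftZ (natext (lang_N (\<omega> :: nat \<Rightarrow> 'a::finite)))"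
    and M: "M \<in> inv_probs shiftN (SigmaN \<omega>)"
  shows "distr \<mu> seq_space (\<lambda>x n. x (int n)) \<in> inv_probs shiftN (SigmaN \<omega>)"
proof -
  have s\<mu>: "sets \<mu> = sets (PiM UNIV (\<lambda>_::int. count_space (UNIV::'a set)))" and p\<mu>: "prob_space \<mu>"
    and e1: "emeasure \<mu> (natext (lang_N \<omega>)) = 1" and inv: "distr \<mu> seq_space shiftZ = \<mu>"
    using \<mu> by (auto simp: inv_probs_def seq_space_def)
  have sM: "sets M = sets (PiM UNIV (\<lambda>_::nat. count_space (UNIV::'a set)))" and eM: "emeasure M (SigmaN \<omega>) = 1"
    using M by (auto simp: inv_probs_def seq_space_def)
  interpret mu: prob_space \<mu> by (rule p\<mu>)
  have sp: "space \<mu> = UNIV" using sets_eq_imp_space_eq[OF s\<mu>] by (simp add: space_PiM)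
  have mpi: "(\<lambda>x n. x (int n)) \<in> measurable \<mu> (PiM UNIV (\<lambda>_::nat. count_space (UNIV::'a set)))"
    using meas_pi by (simp add: measurable_cong_sets[OF s\<mu> refl])
  have msh: "shiftZ \<in> measurable \<mu> (PiM UNIV (\<lambda>_::int. count_space (UNIV::'a set)))"
    using shiftZ_meas by (simp add: measurable_cong_sets[OF s\<mu> refl])
  have SigS: "SigmaN \<omega> \<in> sets (PiM UNIV (\<lambda>_::nat. count_space (UNIV::'a set)))"
    using eM emeasure_notin_sets[of "SigmaN \<omega>" M] sM by auto
  have natS: "natext (lang_N \<omega>) \<in> sets \<mu>" using e1 emeasure_notin_sets[of "natext (lang_N \<omega>)" \<mu>] by auto
  let ?D = "distr \<mu> seq_space (\<lambda>x n. x (int n))"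
  have "prob_space ?D" unfolding seq_space_def by (rule mu.prob_space_distr[OF mpi])
  moreover have "emeasure ?D (SigmaN \<omega>) = 1"
  proof -
    have "emeasure ?D (SigmaN \<omega>) = emeasure \<mu> ((\<lambda>x n. x (int n)) -` SigmaN \<omega> \<inter> space \<mu>)"
      unfolding seq_space_def by (rule emeasure_distr[OF mpi SigS])
    moreover have "emeasure \<mu> (natext (lang_N \<omega>)) \<le> emeasure \<mu> ((\<lambda>x n. x (int n)) -` SigmaN \<omega> \<inter> space \<mu>)"
      by (rule emeasure_mono) (use natext_SigmaN sp measurable_sets[OF mpi SigS] in auto)
    moreover have "emeasure \<mu> ((\<lambda>x n. x (int n)) -` SigmaN \<omega> \<inter> space \<mu>) \<le> 1" by (rule mu.emeasure_le_1)
    ultimately show ?thesis using e1 by (metis antisym)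
  qed
  moreover have "distr ?D seq_space shiftN = ?D"
  proof -
    have "distr ?D seq_space shiftN = distr \<mu> seq_space (shiftN \<circ> (\<lambda>x n. x (int n)))"
      unfolding seq_space_def by (rule distr_distr[OF shiftN_meas mpi])
    also have "shiftN \<circ> (\<lambda>x n. x (int n)) = (\<lambda>x n. x (int n)) \<circ> shiftZ"
      by (auto simp: shiftN_def shiftZ_def fun_eq_iff add.commute)
    also have "distr \<mu> seq_space ((\<lambda>x n. x (int n)) \<circ> shiftZ) = distr (distr \<mu> seq_space shiftZ) seq_space (\<lambda>x n. x (int n))"
      unfolding seq_space_def by (rule distr_distr[symmetric, OF meas_pi msh])
    also have "\<dots> = ?D" using inv by simp
    finally show ?thesis .
  qed
  ultimately show ?thesis unfolding inv_probs_def by (simp add: seq_space_def)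
qed

lemma inv_iter:
  assumes s\<mu>: "sets \<mu> = sets (PiM UNIV (\<lambda>_::int. count_space (UNIV::'a set)))" and inv: "distr \<mu> seq_space shiftZ = \<mu>"
    and C: "C \<in> sets (PiM UNIV (\<lambda>_::int. count_space (UNIV::'a set)))"
  shows "emeasure \<mu> ((shiftZ ^^ m) -` C) = emeasure \<mu> C \<and> (shiftZ ^^ m) -` C \<in> sets (PiM UNIV (\<lambda>_::int. count_space (UNIV::'a set)))"
proof (induction m)
  case 0 then show ?case using C by simp
next
  case (Suc m)
  have sp: "space \<mu> = UNIV" using sets_eq_imp_space_eq[OF s\<mu>] by (simp add: space_PiM)
  have msh: "shiftZ \<in> measurable \<mu> (PiM UNIV (\<lambda>_::int. count_space (UNIV::'a set)))"
    using shiftZ_meas by (simp add: measurable_cong_sets[OF s\<mu> refl])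
  have e: "(shiftZ ^^ Suc m) -` C = shiftZ -` ((shiftZ ^^ m) -` C)" by (auto simp: funpow_swap1)
  have S: "(shiftZ ^^ Suc m) -` C \<in> sets (PiM UNIV (\<lambda>_::int. count_space (UNIV::'a set)))"
    using measurable_sets[OF shiftZ_meas Suc.IH[THEN conjunct2]] e by (simp add: space_PiM)
  have "emeasure \<mu> (shiftZ -` ((shiftZ ^^ m) -` C)) = emeasure (distr \<mu> seq_space shiftZ) ((shiftZ ^^ m) -` C)"
    using emeasure_distr[OF msh Suc.IH[THEN conjunct2]] sp by (simp add: seq_space_def)
  also have "\<dots> = emeasure \<mu> ((shiftZ ^^ m) -` C)" using inv by simp
  finally have E1: "emeasure \<mu> (shiftZ -` ((shiftZ ^^ m) -` C)) = emeasure \<mu> C" using Suc.IH by simp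
  have S': "shiftZ -` ((shiftZ ^^ m) -` C) \<in> sets (PiM UNIV (\<lambda>_::int. count_space (UNIV::'a set)))" using S e by simp
  show ?case unfolding e using E1 S' by (intro conjI)
qed

lemma uniq_N:
  assumes UE: "uniquely_ergodic shiftN (SigmaN (\<omega> :: nat \<Rightarrow> 'a::finite))"
    and \<mu>1: "\<mu>1 \<in> inv_probs shiftZ (natext (lang_N \<omega>))" and \<mu>2: "\<mu>2 \<in> inv_probs shiftZ (natext (lang_N \<omega>))"
  shows "\<mu>1 = \<mu>2"
proof -
  obtain M where M: "M \<in> inv_probs shiftN (SigmaN \<omega>)" using UE unfolding uniquely_ergodic_def by blast
  have dM: "distr \<mu> seq_space (\<lambda>x n. x (int n)) = M" if "\<mu> \<in> inv_probs shiftZ (natext (lang_N \<omega>))" for \<mu>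
    using proj_inv[OF that M] M UE unfolding uniquely_ergodic_def by blast
  have key: "emeasure \<mu> (prod_emb UNIV (\<lambda>_::int. count_space (UNIV::'a set)) J (PiE J A)) =
      emeasure M {y. \<forall>j\<in>J. y (nat (j + int N)) \<in> A j}"
    if \<mu>: "\<mu> \<in> inv_probs shiftZ (natext (lang_N \<omega>))" and J: "finite J" and N: "\<forall>j\<in>J. - int N \<le> j" for \<mu> J A N
  proof -
    have s\<mu>: "sets \<mu> = sets (PiM UNIV (\<lambda>_::int. count_space (UNIV::'a set)))" and inv: "distr \<mu> seq_space shiftZ = \<mu>"
      using \<mu> by (auto simp: inv_probs_def seq_space_def)
    have sp: "space \<mu> = UNIV" using sets_eq_imp_space_eq[OF s\<mu>] by (simp add: space_PiM)
    have mpi: "(\<lambda>x n. x (int n)) \<in> measurable \<mu> (PiM UNIV (\<lambda>_::nat. count_space (UNIV::'a set)))"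
      using meas_pi by (simp add: measurable_cong_sets[OF s\<mu> refl])
    define B where "B = prod_emb UNIV (\<lambda>_::int. count_space (UNIV::'a set)) J (PiE J A)"
    define B' where "B' = {y :: nat \<Rightarrow> 'a. \<forall>j\<in>J. y (nat (j + int N)) \<in> A j}"
    have BS: "B \<in> sets (PiM UNIV (\<lambda>_::int. count_space (UNIV::'a set)))"
      unfolding B_def using J by (intro sets_PiM_I) auto
    have B'S: "B' \<in> sets (PiM UNIV (\<lambda>_::nat. count_space (UNIV::'a set)))"
    proof -
      have "{y \<in> space (PiM UNIV (\<lambda>_::nat. count_space (UNIV::'a set))). \<forall>j\<in>J. y (nat (j + int N)) \<in> A j}
          \<in> sets (PiM UNIV (\<lambda>_::nat. count_space (UNIV::'a set)))"
      proof (rule sets.sets_Collect_finite_All[OF _ J])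
        fix j
        show "{y \<in> space (PiM UNIV (\<lambda>_::nat. count_space (UNIV::'a set))). y (nat (j + int N)) \<in> A j}
          \<in> sets (PiM UNIV (\<lambda>_::nat. count_space (UNIV::'a set)))"
          using measurable_sets[OF measurable_component_singleton[of "nat (j + int N)" UNIV "\<lambda>_::nat. count_space (UNIV::'a set)"], of "A j"]
          by (simp add: vimage_def Int_def conj_commute)
      qed
      then show ?thesis by (simp add: B'_def space_PiM)
    qed
    have "emeasure \<mu> B = emeasure \<mu> ((shiftZ ^^ N) -` B)" using inv_iter[OF s\<mu> inv BS, of N] by simp
    also have "(shiftZ ^^ N) -` B = (\<lambda>x n. x (int n)) -` B' \<inter> space \<mu>"
    proof -
      have eqj: "int (nat (j + int N)) = j + int N" if "j \<in> J" for j using N that by auto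
      have "x \<in> (shiftZ ^^ N) -` B \<longleftrightarrow> (\<forall>j\<in>J. x (j + int N) \<in> A j)" for x
        by (simp add: B_def shiftZ_pow prod_emb_def PiE_iff)
      moreover have "x \<in> (\<lambda>x n. x (int n)) -` B' \<longleftrightarrow> (\<forall>j\<in>J. x (j + int N) \<in> A j)" for x
      proof -
        have "x \<in> (\<lambda>x n. x (int n)) -` B' \<longleftrightarrow> (\<forall>j\<in>J. x (int (nat (j + int N))) \<in> A j)"
          by (simp add: B'_def del: int_nat_eq)
        also have "\<dots> \<longleftrightarrow> (\<forall>j\<in>J. x (j + int N) \<in> A j)" using eqj by (intro ball_cong) auto
        finally show ?thesis .
      qed
      ultimately show ?thesis using sp by auto
    qed
    also have "emeasure \<mu> \<dots> = emeasure (distr \<mu> seq_space (\<lambda>x n. x (int n))) B'"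
      unfolding seq_space_def by (rule emeasure_distr[OF mpi B'S, symmetric])
    also have "\<dots> = emeasure M B'" using dM[OF \<mu>] by simp
    finally show ?thesis by (simp add: B_def B'_def)
  qed
  show ?thesis
  proof (rule measure_eqI_PiM_infinite)
    show "sets \<mu>1 = sets (PiM UNIV (\<lambda>_::int. count_space (UNIV::'a set)))" using \<mu>1 by (simp add: inv_probs_def seq_space_def)
    show "sets \<mu>2 = sets (PiM UNIV (\<lambda>_::int. count_space (UNIV::'a set)))" using \<mu>2 by (simp add: inv_probs_def seq_space_def)
    show "finite_measure \<mu>1" using \<mu>1 by (simp add: inv_probs_def prob_space_def)
  next
    fix J :: "int set" and A :: "int \<Rightarrow> 'a set" assume J: "finite J" "J \<subseteq> UNIV" "\<And>i. i \<in> J \<Longrightarrow> A i \<in> sets (count_space UNIV)"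
    obtain N where N: "\<forall>j\<in>J. - int N \<le> j" using finite_lower_bound[OF J(1)] by blast
    show "emeasure \<mu>1 (prod_emb UNIV (\<lambda>_. count_space (UNIV::'a set)) J (PiE J A)) = emeasure \<mu>2 (prod_emb UNIV (\<lambda>_. count_space (UNIV::'a set)) J (PiE J A))"
      using key[OF \<mu>1 J(1) N] key[OF \<mu>2 J(1) N] by simp
  qed
qed

lemma uniq_Z:
  assumes UE: "uniquely_ergodic shiftZ (SigmaZ (\<omega> :: int \<Rightarrow> 'a::finite))"
    and \<mu>1: "\<mu>1 \<in> inv_probs shiftZ (natext (lang_Z \<omega>))" and \<mu>2: "\<mu>2 \<in> inv_probs shiftZ (natext (lang_Z \<omega>))"
  shows "\<mu>1 = \<mu>2"
  using UE \<mu>1 \<mu>2 unfolding uniquely_ergodic_def natext_SigmaZ by blast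

theorem theorem1p3:
  shows
  "(\<forall>\<omega> :: nat \<Rightarrow> 'a :: finite.
      uniquely_ergodic shiftN (SigmaN \<omega>) \<and>
      \<not> bdd_above (range (complexity (lang_N \<omega>))) \<and>
      (\<lambda>n. real (complexity (lang_N \<omega>) (Suc n)) / real (complexity (lang_N \<omega>) n)) \<longlonglongrightarrow> 1
      \<longrightarrow> (\<exists>\<mu>. inv_probs shiftZ (natext (lang_N \<omega>)) = {\<mu>} \<and>
              BS_limit_line (rauzy (lang_N \<omega>)) \<mu>))
 \<and> (\<forall>\<omega> :: int \<Rightarrow> 'a :: finite.
      uniquely_ergodic shiftZ (SigmaZ \<omega>) \<and>
      \<not> bdd_above (range (complexity (lang_Z \<omega>))) \<and>
      (\<lambda>n. real (complexity (lang_Z \<omega>) (Suc n)) / real (complexity (lang_Z \<omega>) n)) \<longlonglongrightarrow> 1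
      \<longrightarrow> (\<exists>\<mu>. inv_probs shiftZ (natext (lang_Z \<omega>)) = {\<mu>} \<and>
              BS_limit_line (rauzy (lang_Z \<omega>)) \<mu>))"
proof (intro conjI allI impI)
  fix \<omega> :: "nat \<Rightarrow> 'a"
  assume h: "uniquely_ergodic shiftN (SigmaN \<omega>) \<and>
      \<not> bdd_above (range (complexity (lang_N \<omega>))) \<and>
      (\<lambda>n. real (complexity (lang_N \<omega>) (Suc n)) / real (complexity (lang_N \<omega>) n)) \<longlonglongrightarrow> 1"
  have pc: "lang.p (lang_N \<omega>) = complexity (lang_N \<omega>)" by (rule p_complexity[OF lang_langN])
  have l2: "lang2 (lang_N \<omega>)"
    by (rule lang2.intro[OF lang_langN], rule lang2_axioms.intro) (use h pc in simp_all)
  show "\<exists>\<mu>. inv_probs shiftZ (natext (lang_N \<omega>)) = {\<mu>} \<and> BS_limit_line (rauzy (lang_N \<omega>)) \<mu>"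
    by (rule lang2.main_lang[OF l2]) (rule uniq_N[OF conjunct1[OF h]])
next
  fix \<omega> :: "int \<Rightarrow> 'a"
  assume h: "uniquely_ergodic shiftZ (SigmaZ \<omega>) \<and>
      \<not> bdd_above (range (complexity (lang_Z \<omega>))) \<and>
      (\<lambda>n. real (complexity (lang_Z \<omega>) (Suc n)) / real (complexity (lang_Z \<omega>) n)) \<longlonglongrightarrow> 1"
  have pc: "lang.p (lang_Z \<omega>) = complexity (lang_Z \<omega>)" by (rule p_complexity[OF lang_langZ])
  have l2: "lang2 (lang_Z \<omega>)"
    by (rule lang2.intro[OF lang_langZ], rule lang2_axioms.intro) (use h pc in simp_all)
  show "\<exists>\<mu>. inv_probs shiftZ (natext (lang_Z \<omega>)) = {\<mu>} \<and> BS_limit_line (rauzy (lang_Z \<omega>)) \<mu>"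
    by (rule lang2.main_lang[OF l2]) (rule uniq_Z[OF conjunct1[OF h]])
qed

end
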